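(* Let $G=(V,E)$ be a finite graph, $k\in\mathbb N$, $j_1,\dots,j_{2k}$ distinct vertices and $uv\in E$. For each $\mathbf m\in\mathbb N_0^E$, writing $E=\{e_1,\dots,e_{|E|}\}$, $$R(\mathbf m)=\frac{\partial^{\mathbf m_{e_1}+\dots+\mathbf m_{e_{|E|}}}}{\partial J_{e_1}^{\mathbf m_{e_1}}\cdots\partial J_{e_{|E|}}^{\mathbf m_{e_{|E|}}}}\left[\Big(\frac{Z_G}{2^{|V|}}\Big)^{k+1}\frac{\partial u_{2k}(\sigma_{j_1},\dots,\sigma_{j_{2k}})}{\partial J_{uv}}\right]\Bigg|_{\mathbf J=\mathbf 0}.$$
   Context: Ising model: on $G=(V,E)$ with $J_{uv}\ge0$, $\mathbb P_G(\sigma)=\exp[\sum_{uv\in E}J_{uv}\sigma_u\sigma_v]/Z_G$ on $\{-1,1\}^V$; $Z_G$ and all expectations are viewed as functions of $\mathbf J=(J_e)_{e\in E}$. Ursell function: $u_m(\sigma_{j_1},\dots,\sigma_{j_m})=\sum_{\mathscr P}(-1)^{|\mathscr P|-1}(|\mathscr P|-1)!\prod_{P\in\mathscr P}\langle\prod_{i\in P}\sigma_{j_i}\rangle_G$ over set partitions of $\{1,\dots,m\}$. Currents, sources $\partial\mathbf n$, connectivity $\overset{\mathbf n}{\longleftrightarrow}$, multinomial coefficients $\binom{\mathbf m}{\mathbf n^1,\dots,\mathbf n^{k+1}}=\prod_e \mathbf m_e!/(\mathbf n^1_e!\cdots\mathbf n^{k+1}_e!)$ are as usual: $\partial\mathbf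 n=\{x:\sum_{y:xy\in E}\mathbf n_{xy}\text{ odd}\}$, and $x\overset{\mathbf n}{\longleftrightarrow}y$ iff there is a path from $x$ to $y$ along edges with positive current. For a partition $\mathscr P$ of $\{j_1,\dots,j_{2k}\}$ into blocks of positive even size and $Q\in\mathscr P$, with a fixed enumeration $P'_1,\dots,P'_{|\mathscr P|-1}$ of $\mathscr P\setminus\{Q\}$, $R(\mathbf m,\mathscr P,Q)=\sum\binom{\mathbf m}{\mathbf n^1,\dots,\mathbf n^{k+1}}\mathbf 1[u\overset{\mathbf n^{|\mathscr P|}+\mathbf n^{|\mathscr P|+1}}{\not\longleftrightarrow}v]$, summed over $\mathbf n^1,\dots,\mathbf n^{k+1}\in\mathbb N_0^E$ with sum $\mathbf m$, $\partial\mathbf n^i=P'_i$ ($i<|\mathscr P|$), $\partial\mathbf n^{|\mathscr P|}=Q\triangle\{u,v\}$, $\partial\mathbf n^i=\emptyset$ ($i>|\mathscr P|$); $R(\mathbf m,\mathscr P)=\sum_{Q\in\mathscr P}R(\mathbf m,\mathscr P,Q)$; and $R(\mathbf m)=\sum_{\mathscr P}(-1)^{|\mathscr P|-1}(|\mathscr P|-1)!R(\mathbf m,\mathscr P)$, the sum over partitions $\mathscr P$ of $\{j_1,\dots,j_{2k}\}$ into blocks of positive even size. *)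

theory Defs
  imports "HOL-Analysis.Analysis" "HOL-Library.Disjoint_Sets"
begin

(* Graph G = (V,E): V a finite vertex set, E a set of edges, each edge a
   two-element subset {x,y} of V.  Couplings J : edges -> real. *)

definition configs :: "'a set \<Rightarrow> ('a \<Rightarrow> real) set" where
  "configs V = PiE V (\<lambda>_. {-1, 1})"

definition ising_weight :: "'a set set \<Rightarrow> ('a set \<Rightarrow> real) \<Rightarrow> ('a \<Rightarrow> real) \<Rightarrow> real" where
  "ising_weight E J \<sigma> = exp (\<Sum>e\<in>E. J e * (\<Prod>x\<in>e. \<sigma> x))"

definition Zfun :: "'a set \<Rightarrow> 'a set set \<Rightarrow> ('a set \<Rightarrow> real) \<Rightarrow> real" where
  "Zfun V E J = (\<Sum>\<sigma>\<in>configs V. ising_weight E J \<sigma>)"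

definition ising_expect :: "'a set \<Rightarrow> 'a set set \<Rightarrow> (('a \<Rightarrow> real) \<Rightarrow> real) \<Rightarrow> ('a set \<Rightarrow> real) \<Rightarrow> real" where
  "ising_expect V E f J = (\<Sum>\<sigma>\<in>configs V. f \<sigma> * ising_weight E J \<sigma>) / Zfun V E J"

definition ursell :: "'a set \<Rightarrow> 'a set set \<Rightarrow> nat \<Rightarrow> (nat \<Rightarrow> 'a) \<Rightarrow> ('a set \<Rightarrow> real) \<Rightarrow> real" where
  "ursell V E m j J =
     (\<Sum>\<P>\<in>{\<P>. partition_on {1..m} \<P>}.
        (-1) ^ (card \<P> - 1) * fact (card \<P> - 1) *
        (\<Prod>B\<in>\<P>. ising_expect V E (\<lambda>\<sigma>. \<Prod>i\<in>B. \<sigma> (j i)) J))"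

definition pdJ :: "'a set \<Rightarrow> (('a set \<Rightarrow> real) \<Rightarrow> real) \<Rightarrow> ('a set \<Rightarrow> real) \<Rightarrow> real" where
  "pdJ e F = (\<lambda>J. deriv (\<lambda>t. F (J(e := t))) (J e))"

fun mixed_pderiv :: "'a set list \<Rightarrow> ('a set \<Rightarrow> nat) \<Rightarrow> (('a set \<Rightarrow> real) \<Rightarrow> real) \<Rightarrow> ('a set \<Rightarrow> real) \<Rightarrow> real" where
  "mixed_pderiv [] m F = F"
| "mixed_pderiv (e # es) m F = (pdJ e ^^ m e) (mixed_pderiv es m F)"

definition sources :: "'a set set \<Rightarrow> ('a set \<Rightarrow> nat) \<Rightarrow> 'a set" where
  "sources E n = {x. odd (\<Sum>e\<in>{e\<in>E. x \<in> e}. n e)}"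

definition curr_connected :: "'a set set \<Rightarrow> ('a set \<Rightarrow> nat) \<Rightarrow> 'a \<Rightarrow> 'a \<Rightarrow> bool" where
  "curr_connected E n x y \<longleftrightarrow> (x, y) \<in> rtrancl {(a, b). {a, b} \<in> E \<and> n {a, b} > 0}"

definition current_tuples :: "'a set set \<Rightarrow> nat \<Rightarrow> ('a set \<Rightarrow> nat) \<Rightarrow> (nat \<Rightarrow> 'a set \<Rightarrow> nat) set" where
  "current_tuples E K m = {ns. (\<forall>i e. (i \<notin> {1..K} \<or> e \<notin> E) \<longrightarrow> ns i e = 0)
                              \<and> (\<forall>e\<in>E. (\<Sum>i=1..K. ns i e) = m e)}"

definition multinom :: "'a set set \<Rightarrow> nat \<Rightarrow> ('a set \<Rightarrow> nat) \<Rightarrow> (nat \<Rightarrow> 'a set \<Rightarrow> nat) \<Rightarrow> real" where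
  "multinom E K m ns = (\<Prod>e\<in>E. fact (m e) / (\<Prod>i=1..K. fact (ns i e)))"

definition R_PQ :: "'a set set \<Rightarrow> nat \<Rightarrow> 'a \<Rightarrow> 'a \<Rightarrow> ('a set \<Rightarrow> nat) \<Rightarrow> 'a set set \<Rightarrow> 'a set \<Rightarrow> real" where
  "R_PQ E k u v m \<P> Q =
     (let p = card \<P>;
          P' = (SOME f. bij_betw f {1..<p} (\<P> - {Q}))
      in (\<Sum>ns\<in>{ns \<in> current_tuples E (k + 1) m.
                   (\<forall>i\<in>{1..<p}. sources E (ns i) = P' i)
                 \<and> sources E (ns p) = (Q - {u, v}) \<union> ({u, v} - Q)
                 \<and> (\<forall>i\<in>{p<..k + 1}. sources E (ns i) = {})}.
            multinom E (k + 1) m ns *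
            (if \<not> curr_connected E (\<lambda>e. ns p e + ns (p + 1) e) u v then 1 else 0)))"

definition R_P :: "'a set set \<Rightarrow> nat \<Rightarrow> 'a \<Rightarrow> 'a \<Rightarrow> ('a set \<Rightarrow> nat) \<Rightarrow> 'a set set \<Rightarrow> real" where
  "R_P E k u v m \<P> = (\<Sum>Q\<in>\<P>. R_PQ E k u v m \<P> Q)"

definition R_fn :: "'a set set \<Rightarrow> nat \<Rightarrow> (nat \<Rightarrow> 'a) \<Rightarrow> 'a \<Rightarrow> 'a \<Rightarrow> ('a set \<Rightarrow> nat) \<Rightarrow> real" where
  "R_fn E k j u v m =
     (\<Sum>\<P>\<in>{\<P>. partition_on (j ` {1..2*k}) \<P> \<and> (\<forall>B\<in>\<P>. even (card B))}.
        (-1) ^ (card \<P> - 1) * fact (card \<P> - 1) * R_P E k u v m \<P>)"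

end

theory Submission
  imports Defs "HOL-Combinatorics.Multiset_Permutations"
begin

lemma count_list_card: "count_list xs i = card {t. t < length xs \<and> xs ! t = i}"
  by (simp add: count_list_eq_length_filter length_filter_conv_card eq_commute)

lemma size_sum_set: "size (sum f S :: 'b multiset) = (\<Sum>x\<in>S. size (f x))"
  by (induction S rule: infinite_finite_induct) auto

lemma edge_multinom:
  fixes c :: "nat \<Rightarrow> nat"
  assumes "(\<Sum>i=1..K. c i) = M"
  shows "real (card {g \<in> PiE {..<M} (\<lambda>_. {1..K}). \<forall>i\<in>{1..K}. card {t. t < M \<and> g t = i} = c i})
         = fact M / (\<Prod>i=1..K. fact (c i))"
proof -
  define A where "A = (\<Sum>i\<in>{1..K}. replicate_mset (c i) i)"
  have cA: "count A i = (if i \<in> {1..K} then c i else 0)" for i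
    unfolding A_def count_sum by (auto simp: count_replicate_mset)
  have sA: "size A = M" unfolding A_def using assms by (simp add: size_sum_set)
  let ?F = "{g \<in> PiE {..<M} (\<lambda>_. {1..K}). \<forall>i\<in>{1..K}. card {t. t < M \<and> g t = i} = c i}"
  have bij: "bij_betw (\<lambda>g. map g [0..<M]) ?F (permutations_of_multiset A)"
  proof (rule bij_betw_byWitness[where f' = "\<lambda>xs t. if t < M then xs ! t else undefined"])
    show "\<forall>g\<in>?F. (\<lambda>t. if t < M then map g [0..<M] ! t else undefined) = g"
      by (auto simp: PiE_def extensional_def fun_eq_iff)
    show "\<forall>xs\<in>permutations_of_multiset A. map (\<lambda>t. if t < M then xs ! t else undefined) [0..<M] = xs"
    proof
      fix xs assume "xs \<in> permutations_of_multiset A"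
      then have "length xs = M" using sA permutations_of_multisetD by (metis size_mset)
      then show "map (\<lambda>t. if t < M then xs ! t else undefined) [0..<M] = xs"
        by (simp add: list_eq_iff_nth_eq)
    qed
    show "(\<lambda>g. map g [0..<M]) ` ?F \<subseteq> permutations_of_multiset A"
    proof
      fix xs assume "xs \<in> (\<lambda>g. map g [0..<M]) ` ?F"
      then obtain g where g: "g \<in> ?F" "xs = map g [0..<M]" by blast
      have "count (mset xs) i = count A i" for i
      proof -
        have "count (mset xs) i = card {t. t < length xs \<and> xs ! t = i}"
          by (simp only: count_mset count_list_card)
        also have "{t. t < length xs \<and> xs ! t = i} = {t. t < M \<and> g t = i}"
          using g by auto
        finally have "count (mset xs) i = card {t. t < M \<and> g t = i}" .
        also have "\<dots> = count A i"
        proof (cases "i \<in> {1..K}")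
          case True then show ?thesis using g cA by auto
        next
          case False
          then have "{t. t < M \<and> g t = i} = {}" using g by (auto simp: PiE_def Pi_def)
          then show ?thesis using False cA by (simp only: card.empty) simp
        qed
        finally show ?thesis .
      qed
      then show "xs \<in> permutations_of_multiset A"
        by (intro permutations_of_multisetI) (simp add: multiset_eq_iff)
    qed
    show "(\<lambda>xs t. if t < M then xs ! t else undefined) ` permutations_of_multiset A \<subseteq> ?F"
    proof
      fix g assume "g \<in> (\<lambda>xs t. if t < M then xs ! t else undefined) ` permutations_of_multiset A"
      then obtain xs where xs: "xs \<in> permutations_of_multiset A" and g: "g = (\<lambda>t. if t < M then xs ! t else undefined)" by blast
      have mx: "mset xs = A" using xs permutations_of_multisetD by blast
      have lx: "length xs = M" using sA mx by (metis size_mset)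
      have cnt: "card {t. t < M \<and> g t = i} = count A i" for i
      proof -
        have "{t. t < M \<and> g t = i} = {t. t < length xs \<and> xs ! t = i}" using lx g by auto
        then show ?thesis using mx by (metis count_list_card count_mset)
      qed
      have "g t \<in> {1..K}" if "t < M" for t
      proof -
        have "xs ! t \<in> set xs" using that lx by simp
        then have "count A (xs ! t) > 0" using mx by (metis count_greater_zero_iff set_mset_mset)
        then show ?thesis using cA g that by (auto split: if_splits)
      qed
      then show "g \<in> ?F" using cnt cA g by (auto simp: PiE_def extensional_def)
    qed
  qed
  have "card ?F = card (permutations_of_multiset A)" using bij by (rule bij_betw_same_card)
  also have "\<dots> = fact (size A) div (\<Prod>x\<in>set_mset A. fact (count A x))"
    by (rule card_permutations_of_multiset(1))
  finally have c1: "card ?F = fact M div (\<Prod>x\<in>set_mset A. fact (count A x))" using sA by simp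
  have dv: "(\<Prod>x\<in>set_mset A. fact (count A x) :: nat) dvd fact M"
    using card_permutations_of_multiset(2)[of A] sA by simp
  have pe: "(\<Prod>x\<in>set_mset A. fact (count A x) :: nat) = (\<Prod>i=1..K. fact (c i))"
  proof -
    have "set_mset A \<subseteq> {1..K}" using cA by (auto simp: count_greater_zero_iff[symmetric] split: if_splits)
    then have "(\<Prod>x\<in>set_mset A. fact (count A x) :: nat) = (\<Prod>x\<in>{1..K}. fact (count A x))"
      by (intro prod.mono_neutral_left) (auto simp: not_in_iff)
    also have "\<dots> = (\<Prod>i=1..K. fact (c i))" using cA by (intro prod.cong) auto
    finally show ?thesis .
  qed
  have "real (card ?F) = real (fact M) / real (\<Prod>i=1..K. fact (c i) :: nat)"
    using c1 dv pe by (simp add: real_of_nat_div)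
  then show ?thesis by (simp add: of_nat_prod)
qed


definition lab :: "'a set set \<Rightarrow> nat \<Rightarrow> ('a set \<Rightarrow> nat) \<Rightarrow> ('a set \<Rightarrow> nat \<Rightarrow> nat) set" where
  "lab E K m = PiE E (\<lambda>e. PiE {..<m e} (\<lambda>_. {1..K}))"

definition cnt :: "'a set set \<Rightarrow> nat \<Rightarrow> ('a set \<Rightarrow> nat) \<Rightarrow> ('a set \<Rightarrow> nat \<Rightarrow> nat) \<Rightarrow> nat \<Rightarrow> 'a set \<Rightarrow> nat" where
  "cnt E K m L = (\<lambda>i e. if e \<in> E \<and> i \<in> {1..K} then card {t. t < m e \<and> L e t = i} else 0)"

lemma finite_lab: "finite E \<Longrightarrow> finite (lab E K m)"
  unfolding lab_def by (intro finite_PiE) auto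

lemma cnt_sum:
  assumes "L \<in> lab E K m" "e \<in> E"
  shows "(\<Sum>i=1..K. card {t. t < m e \<and> L e t = i}) = m e"
proof -
  have "(\<Sum>i\<in>{1..K}. \<Sum>t\<in>{x. x \<in> {..<m e} \<and> L e x = i}. (1::nat)) = (\<Sum>t\<in>{..<m e}. 1)"
    using assms by (intro sum.group) (auto simp: lab_def PiE_def Pi_def)
  moreover have "{x. x \<in> {..<m e} \<and> L e x = i} = {t. t < m e \<and> L e t = i}" for i by auto
  ultimately show ?thesis by simp
qed

lemma cnt_tuples: "L \<in> lab E K m \<Longrightarrow> cnt E K m L \<in> current_tuples E K m"
  unfolding current_tuples_def using cnt_sum[of L E K m]
  by (auto simp: cnt_def intro!: sum.cong)

definition efib :: "nat \<Rightarrow> ('a set \<Rightarrow> nat) \<Rightarrow> (nat \<Rightarrow> 'a set \<Rightarrow> nat) \<Rightarrow> 'a set \<Rightarrow> (nat \<Rightarrow> nat) set" where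
  "efib K m ns e = {g \<in> PiE {..<m e} (\<lambda>_. {1..K}). \<forall>i\<in>{1..K}. card {t. t < m e \<and> g t = i} = ns i e}"

lemma fiber_eq:
  assumes "ns \<in> current_tuples E K m"
  shows "{L \<in> lab E K m. cnt E K m L = ns} = PiE E (efib K m ns)"
proof (intro set_eqI iffI)
  fix L assume L: "L \<in> {L \<in> lab E K m. cnt E K m L = ns}"
  then show "L \<in> PiE E (efib K m ns)"
    by (auto simp: lab_def efib_def cnt_def PiE_def Pi_def fun_eq_iff split: if_splits)
next
  fix L assume L: "L \<in> PiE E (efib K m ns)"
  then have "L \<in> lab E K m" by (auto simp: lab_def efib_def PiE_def Pi_def)
  moreover have "cnt E K m L = ns"
  proof (intro ext)
    fix i e show "cnt E K m L i e = ns i e"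
      using L assms by (auto simp: cnt_def efib_def current_tuples_def PiE_def Pi_def)
  qed
  ultimately show "L \<in> {L \<in> lab E K m. cnt E K m L = ns}" by blast
qed

lemma card_fiber:
  assumes "finite E" "ns \<in> current_tuples E K m"
  shows "real (card {L \<in> lab E K m. cnt E K m L = ns}) = multinom E K m ns"
proof -
  have "real (card {L \<in> lab E K m. cnt E K m L = ns}) = real (\<Prod>e\<in>E. card (efib K m ns e))"
    using fiber_eq[OF assms(2)] assms(1) by (simp add: card_PiE)
  also have "\<dots> = (\<Prod>e\<in>E. real (card (efib K m ns e)))" by (simp add: of_nat_prod)
  also have "\<dots> = multinom E K m ns"
    unfolding multinom_def
  proof (intro prod.cong refl)
    fix e assume e: "e \<in> E"
    have "(\<Sum>i=1..K. ns i e) = m e" using assms(2) e by (auto simp: current_tuples_def)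
    from edge_multinom[OF this] show "real (card (efib K m ns e)) = fact (m e) / (\<Prod>i=1..K. fact (ns i e))"
      by (simp add: efib_def)
  qed
  finally show ?thesis .
qed

lemma tuples_image:
  assumes "finite E"
  shows "current_tuples E K m = cnt E K m ` lab E K m"
proof
  show "cnt E K m ` lab E K m \<subseteq> current_tuples E K m" using cnt_tuples by blast
next
  show "current_tuples E K m \<subseteq> cnt E K m ` lab E K m"
  proof
    fix ns assume ns: "ns \<in> current_tuples E K m"
    have "multinom E K m ns > 0" unfolding multinom_def
      by (intro prod_pos divide_pos_pos) (auto intro: prod_pos)
    then have "{L \<in> lab E K m. cnt E K m L = ns} \<noteq> {}"
      using card_fiber[OF assms ns] by (metis card.empty of_nat_0 less_irrefl)
    then show "ns \<in> cnt E K m ` lab E K m" by blast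
  qed
qed

lemma lemmaM:
  assumes "finite E"
  shows "(\<Sum>ns\<in>current_tuples E K m. multinom E K m ns * h ns) = (\<Sum>L\<in>lab E K m. h (cnt E K m L))"
proof -
  have fin: "finite (current_tuples E K m)"
    using tuples_image[OF assms] finite_lab[OF assms] by simp
  have "(\<Sum>L\<in>lab E K m. h (cnt E K m L))
        = (\<Sum>ns\<in>current_tuples E K m. \<Sum>L\<in>{L. L \<in> lab E K m \<and> cnt E K m L = ns}. h (cnt E K m L))"
    by (rule sum.group[symmetric]) (use finite_lab[OF assms] fin cnt_tuples in auto)
  also have "\<dots> = (\<Sum>ns\<in>current_tuples E K m. real (card {L \<in> lab E K m. cnt E K m L = ns}) * h ns)"
    by (intro sum.cong refl) auto
  also have "\<dots> = (\<Sum>ns\<in>current_tuples E K m. multinom E K m ns * h ns)"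
    using card_fiber[OF assms] by simp
  finally show ?thesis by simp
qed


definition edges_ok :: "'a set \<Rightarrow> 'a set set \<Rightarrow> bool" where
  "edges_ok V E \<longleftrightarrow> finite V \<and> (\<forall>e\<in>E. \<exists>x y. e = {x, y} \<and> x \<in> V \<and> y \<in> V \<and> x \<noteq> y)"

lemma edges_ok_finite: "edges_ok V E \<Longrightarrow> finite E"
proof -
  assume a: "edges_ok V E"
  then have "E \<subseteq> Pow V" by (auto simp: edges_ok_def)
  then show "finite E" using a by (auto simp: edges_ok_def intro: finite_subset)
qed

lemma edges_ok_sub: "edges_ok V E \<Longrightarrow> e \<in> E \<Longrightarrow> e \<subseteq> V"
  by (auto simp: edges_ok_def)

lemma finite_configs: "finite V \<Longrightarrow> finite (configs V)"
  unfolding configs_def by (intro finite_PiE) auto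

lemma sum_pm1_power: "(\<Sum>s\<in>{-1,1::real}. s ^ d) = (if even d then 2 else 0)"
  by simp

lemma parity_sum:
  assumes ok: "edges_ok V E" and AV: "A \<subseteq> V"
  shows "(\<Sum>\<sigma>\<in>configs V. (\<Prod>x\<in>A. \<sigma> x) * (\<Prod>e\<in>E. (\<Prod>x\<in>e. \<sigma> x) ^ n e))
         = (if sources E n = A then 2 ^ card V else 0)"
proof -
  have fV: "finite V" using ok by (simp add: edges_ok_def)
  have fE: "finite E" using ok by (rule edges_ok_finite)
  define d where "d x = (if x \<in> A then 1 else 0) + (\<Sum>e\<in>{e. e \<in> E \<and> x \<in> e}. n e)" for x
  have pt: "(\<Prod>x\<in>A. \<sigma> x) * (\<Prod>e\<in>E. (\<Prod>x\<in>e. \<sigma> x) ^ n e) = (\<Prod>x\<in>V. \<sigma> x ^ d x)" for \<sigma> :: "'a \<Rightarrow> real"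
  proof -
    have 1: "(\<Prod>x\<in>A. \<sigma> x) = (\<Prod>x\<in>V. \<sigma> x ^ (if x \<in> A then 1 else 0))"
    proof -
      have "(\<Prod>x\<in>V. \<sigma> x ^ (if x \<in> A then 1 else 0)) = (\<Prod>x\<in>V. if x \<in> A then \<sigma> x else 1)"
        by (intro prod.cong) auto
      also have "\<dots> = (\<Prod>x\<in>V \<inter> A. \<sigma> x)" by (rule prod.inter_restrict[symmetric, OF fV])
      also have "V \<inter> A = A" using AV by blast
      finally show ?thesis by simp
    qed
    have "(\<Prod>e\<in>E. (\<Prod>x\<in>e. \<sigma> x) ^ n e) = (\<Prod>e\<in>E. \<Prod>x\<in>{x. x \<in> V \<and> x \<in> e}. \<sigma> x ^ n e)"
    proof (intro prod.cong refl)
      fix e assume "e \<in> E"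
      then have "{x. x \<in> V \<and> x \<in> e} = e" using edges_ok_sub[OF ok] by auto
      then show "(\<Prod>x\<in>e. \<sigma> x) ^ n e = (\<Prod>x\<in>{x. x \<in> V \<and> x \<in> e}. \<sigma> x ^ n e)"
        by (simp add: prod_power_distrib)
    qed
    also have "\<dots> = (\<Prod>x\<in>V. \<Prod>e\<in>{e. e \<in> E \<and> x \<in> e}. \<sigma> x ^ n e)"
      by (rule prod.swap_restrict[OF fE fV])
    also have "\<dots> = (\<Prod>x\<in>V. \<sigma> x ^ (\<Sum>e\<in>{e. e \<in> E \<and> x \<in> e}. n e))"
      by (simp add: power_sum)
    finally show ?thesis using 1 by (simp add: d_def power_add prod.distrib)
  qed
  have "(\<Sum>\<sigma>\<in>configs V. (\<Prod>x\<in>A. \<sigma> x) * (\<Prod>e\<in>E. (\<Prod>x\<in>e. \<sigma> x) ^ n e))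
        = (\<Sum>\<sigma>\<in>PiE V (\<lambda>_. {-1,1}). \<Prod>x\<in>V. \<sigma> x ^ d x)"
    unfolding configs_def using pt by simp
  also have "\<dots> = (\<Prod>x\<in>V. \<Sum>s\<in>{-1,1::real}. s ^ d x)"
    by (rule prod_sum_PiE[symmetric]) (use fV in auto)
  also have "\<dots> = (\<Prod>x\<in>V. if even (d x) then 2 else 0)"
    by (simp only: sum_pm1_power)
  also have "\<dots> = (if \<forall>x\<in>V. even (d x) then 2 ^ card V else 0)"
  proof (cases "\<forall>x\<in>V. even (d x)")
    case True then show ?thesis by simp
  next
    case False
    then obtain x where "x \<in> V" "odd (d x)" by blast
    then show ?thesis using fV by (intro trans[OF prod_zero]) auto
  qed
  also have "(\<forall>x\<in>V. even (d x)) \<longleftrightarrow> sources E n = A"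
  proof -
    have sV: "sources E n \<subseteq> V"
    proof
      fix x assume "x \<in> sources E n"
      have "{e. e \<in> E \<and> x \<in> e} \<noteq> {}"
      proof
        assume "{e. e \<in> E \<and> x \<in> e} = {}"
        with \<open>x \<in> sources E n\<close> show False by (simp add: sources_def)
      qed
      then show "x \<in> V" using edges_ok_sub[OF ok] by auto
    qed
    have "(\<forall>x\<in>V. even (d x)) \<longleftrightarrow> (\<forall>x\<in>V. x \<in> A \<longleftrightarrow> x \<in> sources E n)"
      by (auto simp: d_def sources_def)
    also have "\<dots> \<longleftrightarrow> sources E n = A" using sV AV by blast
    finally show ?thesis .
  qed
  finally show ?thesis .
qed

lemma multinom_lab:
  fixes s :: "nat \<Rightarrow> 'a set \<Rightarrow> 'b::comm_semiring_1"
  assumes fE: "finite E"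
  shows "(\<Prod>e\<in>E. (\<Sum>i=1..K. s i e) ^ m e) = (\<Sum>L\<in>lab E K m. \<Prod>i=1..K. \<Prod>e\<in>E. s i e ^ cnt E K m L i e)"
proof -
  have "(\<Prod>e\<in>E. (\<Sum>i=1..K. s i e) ^ m e) = (\<Prod>e\<in>E. \<Prod>t\<in>{..<m e}. \<Sum>i\<in>{1..K}. s i e)"
    by simp
  also have "\<dots> = (\<Prod>e\<in>E. \<Sum>g\<in>PiE {..<m e} (\<lambda>_. {1..K}). \<Prod>t\<in>{..<m e}. s (g t) e)"
    by (intro prod.cong refl prod_sum_PiE) (auto intro: finite_PiE)
  also have "\<dots> = (\<Sum>L\<in>lab E K m. \<Prod>e\<in>E. \<Prod>t\<in>{..<m e}. s (L e t) e)"
    unfolding lab_def by (rule prod_sum_PiE) (use fE in \<open>auto intro: finite_PiE\<close>)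
  also have "\<dots> = (\<Sum>L\<in>lab E K m. \<Prod>i=1..K. \<Prod>e\<in>E. s i e ^ cnt E K m L i e)"
  proof (intro sum.cong refl)
    fix L assume L: "L \<in> lab E K m"
    have "(\<Prod>t\<in>{..<m e}. s (L e t) e) = (\<Prod>i=1..K. s i e ^ cnt E K m L i e)" if e: "e \<in> E" for e
    proof -
      have "(\<Prod>t\<in>{..<m e}. s (L e t) e) = (\<Prod>i\<in>{1..K}. \<Prod>t\<in>{t. t \<in> {..<m e} \<and> L e t = i}. s (L e t) e)"
        by (rule prod.group[symmetric]) (use L e in \<open>auto simp: lab_def PiE_def Pi_def\<close>)
      also have "\<dots> = (\<Prod>i\<in>{1..K}. s i e ^ cnt E K m L i e)"
      proof (intro prod.cong refl)
        fix i assume i: "i \<in> {1..K}"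
        have "(\<Prod>t\<in>{t. t \<in> {..<m e} \<and> L e t = i}. s (L e t) e) = (\<Prod>t\<in>{t. t \<in> {..<m e} \<and> L e t = i}. s i e)"
          by (intro prod.cong) auto
        also have "\<dots> = s i e ^ card {t. t < m e \<and> L e t = i}" by simp
        finally show "(\<Prod>t\<in>{t. t \<in> {..<m e} \<and> L e t = i}. s (L e t) e) = s i e ^ cnt E K m L i e"
          using i e by (simp add: cnt_def)
      qed
      finally show ?thesis .
    qed
    then have "(\<Prod>e\<in>E. \<Prod>t\<in>{..<m e}. s (L e t) e) = (\<Prod>e\<in>E. \<Prod>i=1..K. s i e ^ cnt E K m L i e)"
      by (rule prod.cong[OF refl]) simp
    also have "\<dots> = (\<Prod>i=1..K. \<Prod>e\<in>E. s i e ^ cnt E K m L i e)" by (rule prod.swap)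
    finally show "(\<Prod>e\<in>E. \<Prod>t\<in>{..<m e}. s (L e t) e) = (\<Prod>i=1..K. \<Prod>e\<in>E. s i e ^ cnt E K m L i e)" .
  qed
  finally show ?thesis .
qed

lemma spin_lab:
  assumes ok: "edges_ok V E" and AV: "\<And>i. i \<in> {1..K} \<Longrightarrow> A i \<subseteq> V"
  shows "(\<Sum>\<sigma>s\<in>PiE {1..K} (\<lambda>_. configs V). (\<Prod>i=1..K. \<Prod>x\<in>A i. \<sigma>s i x) *
            (\<Prod>e\<in>E. (\<Sum>i=1..K. \<Prod>x\<in>e. \<sigma>s i x) ^ m e))
       = 2 ^ (card V * K) * (\<Sum>L\<in>lab E K m. if \<forall>i\<in>{1..K}. sources E (cnt E K m L i) = A i then 1 else 0)"
proof -
  have fE: "finite E" using ok by (rule edges_ok_finite)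
  have fV: "finite V" using ok by (simp add: edges_ok_def)
  let ?c = "cnt E K m"
  have "(\<Sum>\<sigma>s\<in>PiE {1..K} (\<lambda>_. configs V). (\<Prod>i=1..K. \<Prod>x\<in>A i. \<sigma>s i x) *
            (\<Prod>e\<in>E. (\<Sum>i=1..K. \<Prod>x\<in>e. \<sigma>s i x) ^ m e))
      = (\<Sum>\<sigma>s\<in>PiE {1..K} (\<lambda>_. configs V). \<Sum>L\<in>lab E K m. \<Prod>i=1..K.
            (\<Prod>x\<in>A i. \<sigma>s i x) * (\<Prod>e\<in>E. (\<Prod>x\<in>e. \<sigma>s i x) ^ ?c L i e))"
    unfolding multinom_lab[OF fE] by (intro sum.cong refl) (simp add: sum_distrib_left prod.distrib)
  also have "\<dots> = (\<Sum>L\<in>lab E K m. \<Sum>\<sigma>s\<in>PiE {1..K} (\<lambda>_. configs V). \<Prod>i=1..K.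
            (\<Prod>x\<in>A i. \<sigma>s i x) * (\<Prod>e\<in>E. (\<Prod>x\<in>e. \<sigma>s i x) ^ ?c L i e))"
    by (rule sum.swap)
  also have "\<dots> = (\<Sum>L\<in>lab E K m. \<Prod>i=1..K. \<Sum>\<sigma>\<in>configs V.
            (\<Prod>x\<in>A i. \<sigma> x) * (\<Prod>e\<in>E. (\<Prod>x\<in>e. \<sigma> x) ^ ?c L i e))"
    by (intro sum.cong refl prod_sum_PiE[symmetric]) (use fV finite_configs in auto)
  also have "\<dots> = (\<Sum>L\<in>lab E K m. \<Prod>i=1..K. if sources E (?c L i) = A i then 2 ^ card V else 0)"
    by (intro sum.cong refl prod.cong parity_sum[OF ok] AV) auto
  also have "\<dots> = (\<Sum>L\<in>lab E K m. 2 ^ (card V * K) * (if \<forall>i\<in>{1..K}. sources E (?c L i) = A i then 1 else 0))"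
  proof (intro sum.cong refl)
    fix L
    show "(\<Prod>i=1..K. if sources E (?c L i) = A i then 2 ^ card V else 0) =
          2 ^ (card V * K) * (if \<forall>i\<in>{1..K}. sources E (?c L i) = A i then 1 else (0::real))"
    proof (cases "\<forall>i\<in>{1..K}. sources E (?c L i) = A i")
      case True then show ?thesis by (simp add: power_mult)
    next
      case False
      then obtain i where "i \<in> {1..K}" "sources E (?c L i) \<noteq> A i" by blast
      then show ?thesis using False by (intro trans[OF prod_zero]) auto
    qed
  qed
  also have "\<dots> = 2 ^ (card V * K) * (\<Sum>L\<in>lab E K m. if \<forall>i\<in>{1..K}. sources E (?c L i) = A i then 1 else 0)"
    by (simp add: sum_distrib_left)
  finally show ?thesis .
qed


definition ind :: "'b set \<Rightarrow> 'b \<Rightarrow> nat" where "ind S = (\<lambda>e. if e \<in> S then 1 else 0)"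

lemma src_cong:
  assumes "finite E" "\<And>e. e \<in> E \<Longrightarrow> even (n e) \<longleftrightarrow> even (n' e)"
  shows "sources E n = sources E n'"
proof -
  have "odd (\<Sum>e\<in>{e \<in> E. x \<in> e}. n e) \<longleftrightarrow> odd (\<Sum>e\<in>{e \<in> E. x \<in> e}. n' e)" for x
  proof -
    have f: "finite {e \<in> E. x \<in> e}" using assms(1) by simp
    have "{a \<in> {e \<in> E. x \<in> e}. odd (n a)} = {a \<in> {e \<in> E. x \<in> e}. odd (n' a)}" using assms(2) by auto
    then show ?thesis using even_sum_iff[OF f, of n] even_sum_iff[OF f, of n'] by simp
  qed
  then show ?thesis by (simp add: sources_def)
qed

lemma src_add:
  assumes "finite E"
  shows "sources E (\<lambda>e. n e + n' e) = (sources E n - sources E n') \<union> (sources E n' - sources E n)"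
  by (auto simp: sources_def sum.distrib)

lemma sources_sub: "edges_ok V E \<Longrightarrow> sources E n \<subseteq> V"
proof
  fix x assume ok: "edges_ok V E" and x: "x \<in> sources E n"
  have "{e. e \<in> E \<and> x \<in> e} \<noteq> {}"
  proof
    assume "{e. e \<in> E \<and> x \<in> e} = {}"
    with x show False by (simp add: sources_def)
  qed
  then show "x \<in> V" using edges_ok_sub[OF ok] by auto
qed

lemma src_edge:
  assumes ok: "edges_ok V E" and e: "{a, b} \<in> E"
  shows "sources E (ind {{a, b}}) = {a, b}"
proof -
  have "(\<Sum>e\<in>{e \<in> E. x \<in> e}. ind {{a, b}} e) = (if x \<in> {a, b} then 1 else 0)" for x
  proof (cases "x \<in> {a,b}")
    case True
    then have "(\<Sum>e\<in>{e \<in> E. x \<in> e}. ind {{a, b}} e) = (\<Sum>e\<in>{{a,b}}. ind {{a, b}} e)"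
      using e edges_ok_finite[OF ok] by (intro sum.mono_neutral_right) (auto simp: ind_def)
    then show ?thesis using True by (simp add: ind_def)
  next
    case False
    have "(\<Sum>e\<in>{e \<in> E. x \<in> e}. ind {{a, b}} e) = 0"
      by (rule sum.neutral) (use False in \<open>auto simp: ind_def\<close>)
    then show ?thesis using False by simp
  qed
  then show ?thesis by (auto simp: sources_def)
qed

lemma edge_ne: "edges_ok V E \<Longrightarrow> {a, b} \<in> E \<Longrightarrow> a \<noteq> b"
  unfolding edges_ok_def by (metis doubleton_eq_iff insert_absorb2)

lemma path_set:
  assumes ok: "edges_ok V E"
    and "(x, y) \<in> rtrancl {(a, b). {a, b} \<in> E \<and> n {a, b} > 0}"
  shows "\<exists>\<gamma>. \<gamma> \<subseteq> {e \<in> E. n e > 0} \<and> sources E (ind \<gamma>) = ({x} - {y}) \<union> ({y} - {x})"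
  using assms(2)
proof (induction rule: rtrancl_induct)
  case base
  have "sources E (ind {}) = {}" by (simp add: sources_def ind_def)
  then show ?case by auto
next
  case (step y z)
  obtain \<gamma> where g: "\<gamma> \<subseteq> {e \<in> E. n e > 0}" "sources E (ind \<gamma>) = ({x} - {y}) \<union> ({y} - {x})"
    using step.IH by blast
  have yz: "{y, z} \<in> E" "n {y, z} > 0" using step.hyps(2) by auto
  have ne: "y \<noteq> z" using edge_ne[OF ok yz(1)] .
  define \<gamma>' where "\<gamma>' = (\<gamma> - {{y,z}}) \<union> ({{y,z}} - \<gamma>)"
  have fE: "finite E" using edges_ok_finite[OF ok] .
  have "sources E (ind \<gamma>') = sources E (\<lambda>e. ind \<gamma> e + ind {{y,z}} e)"
    by (rule src_cong[OF fE]) (auto simp: ind_def \<gamma>'_def)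
  also have "\<dots> = ({x} - {z}) \<union> ({z} - {x})"
    unfolding src_add[OF fE] g(2) src_edge[OF ok yz(1)] using ne by auto
  finally show ?case using g(1) yz by (intro exI[of _ \<gamma>']) (auto simp: \<gamma>'_def)
qed

lemma handshake:
  assumes ok: "edges_ok V E" and s: "sources E n = {u, v}" and uv: "u \<noteq> v"
  shows "curr_connected E n u v"
proof (rule ccontr)
  assume nc: "\<not> curr_connected E n u v"
  let ?R = "{(a, b). {a, b} \<in> E \<and> n {a, b} > 0}"
  define C where "C = {y. (u, y) \<in> rtrancl ?R} \<inter> V"
  have fV: "finite V" using ok by (simp add: edges_ok_def)
  have fE: "finite E" using edges_ok_finite[OF ok] .
  have fC: "finite C" using fV by (simp add: C_def)
  have uV: "u \<in> V" using sources_sub[OF ok] s by auto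
  have uC: "u \<in> C" using uV by (simp add: C_def)
  have vC: "v \<notin> C" using nc by (simp add: C_def curr_connected_def)
  define deg where "deg x = (\<Sum>e\<in>{e. e \<in> E \<and> x \<in> e}. n e)" for x
  have sw: "(\<Sum>x\<in>C. deg x) = (\<Sum>e\<in>E. \<Sum>x\<in>{x. x \<in> C \<and> x \<in> e}. n e)"
    unfolding deg_def by (rule sum.swap_restrict[OF fC fE])
  have "even (\<Sum>e\<in>E. \<Sum>x\<in>{x. x \<in> C \<and> x \<in> e}. n e)"
  proof (rule dvd_sum)
    fix e assume e: "e \<in> E"
    show "even (\<Sum>x\<in>{x. x \<in> C \<and> x \<in> e}. n e)"
    proof (cases "n e = 0")
      case True then show ?thesis by simp
    next
      case False
      obtain a b where ab: "e = {a, b}" "a \<in> V" "b \<in> V" "a \<noteq> b" using e ok by (auto simp: edges_ok_def)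
      have r1: "(a, b) \<in> ?R" "(b, a) \<in> ?R" using e ab False by (auto simp: insert_commute)
      have "a \<in> C \<longleftrightarrow> b \<in> C"
        using r1 ab by (auto simp: C_def intro: rtrancl_into_rtrancl)
      then have "{x. x \<in> C \<and> x \<in> e} = {} \<or> {x. x \<in> C \<and> x \<in> e} = {a, b}" using ab by auto
      then show ?thesis
      proof (elim disjE)
        assume h: "{x. x \<in> C \<and> x \<in> e} = {}" show ?thesis by (simp only: h) simp
      next
        assume "{x. x \<in> C \<and> x \<in> e} = {a, b}" then show ?thesis using ab by simp
      qed
    qed
  qed
  then have ev: "even (\<Sum>x\<in>C. deg x)" using sw by simp
  have "{x \<in> C. odd (deg x)} = C \<inter> sources E n" by (auto simp: deg_def sources_def)
  also have "\<dots> = {u}" using s uC vC by auto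
  finally have "odd (\<Sum>x\<in>C. deg x)" using even_sum_iff[OF fC, of deg] by simp
  then show False using ev by simp
qed

lemma conn_mono:
  assumes "curr_connected E n u v" "\<And>e. e \<in> E \<Longrightarrow> n e > 0 \<Longrightarrow> n' e > 0"
  shows "curr_connected E n' u v"
proof -
  have "{(a, b). {a, b} \<in> E \<and> n {a, b} > 0} \<subseteq> {(a, b). {a, b} \<in> E \<and> n' {a, b} > 0}"
    using assms(2) by auto
  then show ?thesis using assms(1) unfolding curr_connected_def by (meson rtrancl_mono subsetD)
qed


locale swl =
  fixes V :: "'a set" and E :: "'a set set" and K :: nat and m :: "'a set \<Rightarrow> nat"
    and p :: nat and u v :: 'a
  assumes ok: "edges_ok V E" and p1: "1 \<le> p" and pK: "Suc p \<le> K" and uv: "u \<noteq> v"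
begin

definition Nsum where "Nsum L = (\<lambda>e. cnt E K m L p e + cnt E K m L (Suc p) e)"
definition conn where "conn L = curr_connected E (Nsum L) u v"
definition gam where "gam L = (SOME \<gamma>. \<gamma> \<subseteq> {e \<in> E. Nsum L e > 0} \<and> sources E (ind \<gamma>) = {u, v})"
definition tmin where "tmin L e = (LEAST t. t < m e \<and> L e t \<in> {p, Suc p})"
definition swp where "swp i = (if i = p then Suc p else if i = Suc p then p else i)"
definition Phi where
  "Phi L = (\<lambda>e t. if e \<in> E \<and> e \<in> gam L \<and> t < m e \<and> t = tmin L e then swp (L e t) else L e t)"

lemma fE: "finite E" using edges_ok_finite[OF ok] .

lemma swp_mem: "swp i \<in> {p, Suc p} \<longleftrightarrow> i \<in> {p, Suc p}"
  by (auto simp: swp_def)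
lemma swp_swp: "swp (swp i) = i" by (auto simp: swp_def)
lemma swp_other: "i \<notin> {p, Suc p} \<Longrightarrow> swp i = i" by (auto simp: swp_def)
lemma swp_K: "i \<in> {1..K} \<Longrightarrow> swp i \<in> {1..K}" using p1 pK by (auto simp: swp_def)
lemma swp_ne: "i \<in> {p, Suc p} \<Longrightarrow> swp i \<noteq> i" by (auto simp: swp_def)

lemma Phi_mem: "Phi L e t \<in> {p, Suc p} \<longleftrightarrow> L e t \<in> {p, Suc p}"
  unfolding Phi_def using swp_mem by auto

lemma Nsum_card: "e \<in> E \<Longrightarrow> Nsum L e = card {t. t < m e \<and> L e t \<in> {p, Suc p}}"
proof -
  assume e: "e \<in> E"
  have "{t. t < m e \<and> L e t \<in> {p, Suc p}} = {t. t < m e \<and> L e t = p} \<union> {t. t < m e \<and> L e t = Suc p}"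
    by auto
  moreover have "card ({t. t < m e \<and> L e t = p} \<union> {t. t < m e \<and> L e t = Suc p})
      = card {t. t < m e \<and> L e t = p} + card {t. t < m e \<and> L e t = Suc p}"
    by (rule card_Un_disjoint) auto
  ultimately show ?thesis using e p1 pK by (simp add: Nsum_def cnt_def)
qed

lemma Nsum_Phi: "Nsum (Phi L) = Nsum L"
proof
  fix e show "Nsum (Phi L) e = Nsum L e"
  proof (cases "e \<in> E")
    case True then show ?thesis using Nsum_card Phi_mem by presburger
  next
    case False then show ?thesis by (simp add: Nsum_def cnt_def)
  qed
qed

lemma gam_Phi: "gam (Phi L) = gam L" unfolding gam_def Nsum_Phi ..
lemma conn_Phi: "conn (Phi L) = conn L" unfolding conn_def Nsum_Phi ..
lemma tmin_Phi: "tmin (Phi L) = tmin L" unfolding tmin_def using Phi_mem by presburger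

lemma Phi_Phi: "Phi (Phi L) = L"
proof (intro ext)
  fix e t
  show "Phi (Phi L) e t = L e t"
  proof (cases "e \<in> E \<and> e \<in> gam L \<and> t < m e \<and> t = tmin L e")
    case True
    then have 1: "Phi L e t = swp (L e t)" unfolding Phi_def by simp
    have "Phi (Phi L) e t = swp (Phi L e t)" unfolding Phi_def[of "Phi L"] gam_Phi tmin_Phi using True by simp
    then show ?thesis using 1 swp_swp by simp
  next
    case False
    then have 1: "Phi L e t = L e t" unfolding Phi_def by auto
    have "Phi (Phi L) e t = Phi L e t" unfolding Phi_def[of "Phi L"] gam_Phi tmin_Phi using False by auto
    then show ?thesis using 1 by simp
  qed
qed

lemma Phi_lab: "L \<in> lab E K m \<Longrightarrow> Phi L \<in> lab E K m"
proof -
  assume L: "L \<in> lab E K m"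
  have a: "\<And>e t. e \<in> E \<Longrightarrow> t < m e \<Longrightarrow> L e t \<in> {1..K}"
    and b: "\<And>e t. e \<in> E \<Longrightarrow> \<not> t < m e \<Longrightarrow> L e t = undefined"
    and c: "\<And>e. e \<notin> E \<Longrightarrow> L e = undefined"
    using L unfolding lab_def PiE_iff extensional_def by auto
  have "Phi L e t \<in> {1..K}" if "e \<in> E" "t < m e" for e t
    using a[OF that] swp_K unfolding Phi_def by auto
  moreover have "Phi L e t = undefined" if "e \<in> E" "\<not> t < m e" for e t
    using b[OF that] that unfolding Phi_def by auto
  moreover have "Phi L e = undefined" if "e \<notin> E" for e
    using c[OF that] that unfolding Phi_def by auto
  ultimately show ?thesis unfolding lab_def PiE_iff extensional_def by auto
qed

lemma gam_prop:
  assumes "conn L"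
  shows "gam L \<subseteq> {e \<in> E. Nsum L e > 0} \<and> sources E (ind (gam L)) = {u, v}"
proof -
  have "\<exists>\<gamma>. \<gamma> \<subseteq> {e \<in> E. Nsum L e > 0} \<and> sources E (ind \<gamma>) = ({u} - {v}) \<union> ({v} - {u})"
    using path_set[OF ok] assms by (simp add: conn_def curr_connected_def)
  moreover have "({u} - {v}) \<union> ({v} - {u}) = {u, v}" using uv by auto
  ultimately show ?thesis unfolding gam_def by (metis (mono_tags, lifting) someI_ex)
qed

lemma cnt_Phi_other: "i \<notin> {p, Suc p} \<Longrightarrow> cnt E K m (Phi L) i = cnt E K m L i"
proof -
  assume i: "i \<notin> {p, Suc p}"
  have "Phi L e t = i \<longleftrightarrow> L e t = i" for e t
    using i swp_mem[of "L e t"] swp_other[of "L e t"] unfolding Phi_def by auto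
  then have "\<And>e. {t. t < m e \<and> Phi L e t = i} = {t. t < m e \<and> L e t = i}" by blast
  then show ?thesis unfolding cnt_def by (simp only:)
qed

lemma cnt_Phi_par:
  assumes c: "conn L" and i: "i \<in> {p, Suc p}" and e: "e \<in> E"
  shows "even (cnt E K m (Phi L) i e) \<longleftrightarrow> even (cnt E K m L i e + ind (gam L) e)"
proof -
  have iK: "i \<in> {1..K}" using i p1 pK by auto
  define S where "S = {t. t < m e \<and> L e t = i}"
  define S' where "S' = {t. t < m e \<and> Phi L e t = i}"
  have cS: "cnt E K m L i e = card S" "cnt E K m (Phi L) i e = card S'"
    using e iK by (simp_all add: cnt_def S_def S'_def)
  have fS: "finite S" by (simp add: S_def)
  show ?thesis
  proof (cases "e \<in> gam L")
    case False
    then have "S' = S" unfolding S_def S'_def Phi_def by auto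
    then show ?thesis using cS False by (simp add: ind_def)
  next
    case True
    have "Nsum L e > 0" using gam_prop[OF c] True by auto
    then have "{t. t < m e \<and> L e t \<in> {p, Suc p}} \<noteq> {}" using Nsum_card[OF e] by (metis card.empty less_irrefl)
    then obtain t1 where "t1 < m e \<and> L e t1 \<in> {p, Suc p}" by blast
    then have t0': "tmin L e < m e \<and> L e (tmin L e) \<in> {p, Suc p}"
      unfolding tmin_def by (rule LeastI)
    obtain t0 where t0e: "t0 = tmin L e" by blast
    have t0: "t0 < m e" "L e t0 \<in> {p, Suc p}" using t0' t0e by auto
    have Ph: "Phi L e t = (if t = t0 then swp (L e t) else L e t)" if "t < m e" for t
      using True e that t0e unfolding Phi_def by auto
    show ?thesis
    proof (cases "L e t0 = i")
      case True2: True
      have ne: "swp (L e t0) \<noteq> i" using swp_ne[OF i] True2 by simp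
      have "S' = S - {t0}"
      proof (intro set_eqI iffI)
        fix t assume "t \<in> S'" then show "t \<in> S - {t0}" using Ph[of t] ne by (auto simp: S_def S'_def split: if_splits)
      next
        fix t assume "t \<in> S - {t0}" then show "t \<in> S'" using Ph[of t] by (auto simp: S_def S'_def)
      qed
      moreover have "t0 \<in> S" using t0 True2 by (simp add: S_def)
      ultimately have "card S = Suc (card S')" using fS by (metis card_Suc_Diff1)
      then show ?thesis using cS True by (simp add: ind_def)
    next
      case False2: False
      have eq: "swp (L e t0) = i" using False2 t0(2) i by (auto simp: swp_def)
      have "S' = insert t0 S"
      proof (intro set_eqI iffI)
        fix t assume "t \<in> S'" then show "t \<in> insert t0 S" using Ph[of t] by (auto simp: S_def S'_def split: if_splits)
      next
        fix t assume "t \<in> insert t0 S" then show "t \<in> S'" using Ph[of t] eq t0(1) False2 by (auto simp: S_def S'_def)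
      qed
      moreover have "t0 \<notin> S" using False2 by (simp add: S_def)
      ultimately have "card S' = Suc (card S)" using fS by simp
      then show ?thesis using cS True by (simp add: ind_def)
    qed
  qed
qed

lemma src_Phi:
  assumes c: "conn L" and i: "i \<in> {p, Suc p}"
  shows "sources E (cnt E K m (Phi L) i) = (sources E (cnt E K m L i) - {u, v}) \<union> ({u, v} - sources E (cnt E K m L i))"
proof -
  have "sources E (cnt E K m (Phi L) i) = sources E (\<lambda>e. cnt E K m L i e + ind (gam L) e)"
    by (rule src_cong[OF fE]) (use cnt_Phi_par[OF c i] in auto)
  then show ?thesis using src_add[OF fE] gam_prop[OF c] by simp
qed

lemma switch:
  fixes A :: "nat \<Rightarrow> 'a set"
  defines "A2 \<equiv> A(p := (A p - {u, v}) \<union> ({u, v} - A p), Suc p := (A (Suc p) - {u, v}) \<union> ({u, v} - A (Suc p)))"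
  shows "(\<Sum>L\<in>lab E K m. if (\<forall>i\<in>{1..K}. sources E (cnt E K m L i) = A i) \<and> conn L then 1 else 0 :: real)
       = (\<Sum>L\<in>lab E K m. if (\<forall>i\<in>{1..K}. sources E (cnt E K m L i) = A2 i) \<and> conn L then 1 else 0)"
proof -
  let ?S = "{L \<in> lab E K m. conn L}"
  let ?g = "\<lambda>L. if \<forall>i\<in>{1..K}. sources E (cnt E K m L i) = A i then 1 else 0 :: real"
  let ?h = "\<lambda>L. if \<forall>i\<in>{1..K}. sources E (cnt E K m L i) = A2 i then 1 else 0 :: real"
  have fl: "finite (lab E K m)" using finite_lab[OF fE] .
  have e1: "(\<Sum>L\<in>lab E K m. if (\<forall>i\<in>{1..K}. sources E (cnt E K m L i) = A i) \<and> conn L then 1 else 0 :: real)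
      = (\<Sum>L\<in>?S. ?g L)"
    by (subst sum.inter_filter[OF fl]) (intro sum.cong, auto)
  have e2: "(\<Sum>L\<in>lab E K m. if (\<forall>i\<in>{1..K}. sources E (cnt E K m L i) = A2 i) \<and> conn L then 1 else 0 :: real)
      = (\<Sum>L\<in>?S. ?h L)"
    by (subst sum.inter_filter[OF fl]) (intro sum.cong, auto)
  have "(\<Sum>L\<in>?S. ?g L) = (\<Sum>L\<in>?S. ?h L)"
  proof (rule sum.reindex_bij_witness[where i = Phi and j = Phi])
    fix L assume L: "L \<in> ?S"
    show "Phi (Phi L) = L" by (rule Phi_Phi)
    show "Phi L \<in> ?S" using L Phi_lab conn_Phi by auto
    have c: "conn L" using L by simp
    have "(\<forall>i\<in>{1..K}. sources E (cnt E K m (Phi L) i) = A2 i) \<longleftrightarrow> (\<forall>i\<in>{1..K}. sources E (cnt E K m L i) = A i)"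
    proof -
      have "sources E (cnt E K m (Phi L) i) = A2 i \<longleftrightarrow> sources E (cnt E K m L i) = A i" for i
      proof (cases "i \<in> {p, Suc p}")
        case True
        then show ?thesis unfolding src_Phi[OF c True] A2_def by auto
      next
        case False
        then show ?thesis using cnt_Phi_other[OF False] by (auto simp: A2_def)
      qed
      then show ?thesis by simp
    qed
    then show "?h (Phi L) = ?g L" by simp
  qed (auto simp: Phi_Phi Phi_lab conn_Phi)
  then show ?thesis using e1 e2 by simp
qed

lemma R_identity:
  fixes A :: "nat \<Rightarrow> 'a set"
  assumes A0: "A (Suc p) = {}"
  defines "A2 \<equiv> A(p := (A p - {u, v}) \<union> ({u, v} - A p), Suc p := {u, v})"
  shows "(\<Sum>L\<in>lab E K m. if (\<forall>i\<in>{1..K}. sources E (cnt E K m L i) = A i) \<and> \<not> conn L then 1 else 0 :: real)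
       = (\<Sum>L\<in>lab E K m. if (\<forall>i\<in>{1..K}. sources E (cnt E K m L i) = A i) then 1 else 0)
       - (\<Sum>L\<in>lab E K m. if (\<forall>i\<in>{1..K}. sources E (cnt E K m L i) = A2 i) then 1 else 0)"
proof -
  have A2': "A2 = A(p := (A p - {u, v}) \<union> ({u, v} - A p), Suc p := (A (Suc p) - {u, v}) \<union> ({u, v} - A (Suc p)))"
    using A0 by (simp add: A2_def)
  note sw = switch[of A, folded A2']
  have c2: "(\<forall>i\<in>{1..K}. sources E (cnt E K m L i) = A2 i) \<Longrightarrow> conn L" for L
  proof -
    assume h: "\<forall>i\<in>{1..K}. sources E (cnt E K m L i) = A2 i"
    have "Suc p \<in> {1..K}" using pK by auto
    then have "sources E (cnt E K m L (Suc p)) = {u, v}" using h by (simp add: A2_def)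
    then have "curr_connected E (cnt E K m L (Suc p)) u v" by (rule handshake[OF ok _ uv])
    then show "conn L" unfolding conn_def by (rule conn_mono) (simp add: Nsum_def)
  qed
  have "(\<Sum>L\<in>lab E K m. if (\<forall>i\<in>{1..K}. sources E (cnt E K m L i) = A i) then 1 else 0 :: real)
     = (\<Sum>L\<in>lab E K m. (if (\<forall>i\<in>{1..K}. sources E (cnt E K m L i) = A i) \<and> conn L then 1 else 0)
         + (if (\<forall>i\<in>{1..K}. sources E (cnt E K m L i) = A i) \<and> \<not> conn L then 1 else 0))"
    by (intro sum.cong) auto
  also have "\<dots> = (\<Sum>L\<in>lab E K m. if (\<forall>i\<in>{1..K}. sources E (cnt E K m L i) = A2 i) then 1 else 0)
      + (\<Sum>L\<in>lab E K m. if (\<forall>i\<in>{1..K}. sources E (cnt E K m L i) = A i) \<and> \<not> conn L then 1 else 0)"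
    unfolding sum.distrib sw using c2 by (simp cong: if_cong) (intro sum.cong, auto)
  finally show ?thesis by simp
qed

end


definition expsum :: "'x set \<Rightarrow> 'a set set \<Rightarrow> ('x \<Rightarrow> real) \<Rightarrow> ('x \<Rightarrow> 'a set \<Rightarrow> real) \<Rightarrow> ('a set \<Rightarrow> real) \<Rightarrow> real" where
  "expsum X E c a = (\<lambda>J. \<Sum>x\<in>X. c x * exp (\<Sum>e\<in>E. J e * a x e))"

lemma pdJ_expsum:
  assumes fE: "finite E" and e: "e \<in> E"
  shows "pdJ e (expsum X E c a) = expsum X E (\<lambda>x. c x * a x e) a"
proof
  fix J :: "'a set \<Rightarrow> real"
  define S where "S x = (\<Sum>e'\<in>E - {e}. J e' * a x e')" for x
  have eq: "(\<Sum>e'\<in>E. (J(e := t)) e' * a x e') = t * a x e + S x" for t x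
  proof -
    have "(\<Sum>e'\<in>E. (J(e := t)) e' * a x e') = (J(e := t)) e * a x e + (\<Sum>e'\<in>E - {e}. (J(e := t)) e' * a x e')"
      by (rule sum.remove[OF fE e])
    also have "(\<Sum>e'\<in>E - {e}. (J(e := t)) e' * a x e') = S x" unfolding S_def by (intro sum.cong) auto
    finally show ?thesis by simp
  qed
  have f: "(\<lambda>t. expsum X E c a (J(e := t))) = (\<lambda>t. \<Sum>x\<in>X. c x * exp (t * a x e + S x))"
    unfolding expsum_def eq ..
  have d: "((\<lambda>t. \<Sum>x\<in>X. c x * exp (t * a x e + S x)) has_real_derivative
            (\<Sum>x\<in>X. c x * (exp (t * a x e + S x) * a x e))) (at t)" for t
    by (auto intro!: derivative_eq_intros sum.cong simp: mult_ac)
  have "pdJ e (expsum X E c a) J = (\<Sum>x\<in>X. c x * (exp (J e * a x e + S x) * a x e))"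
    unfolding pdJ_def f by (rule DERIV_imp_deriv[OF d])
  also have "\<dots> = expsum X E (\<lambda>x. c x * a x e) a J"
    unfolding expsum_def using eq[of "J e"] by (simp add: mult_ac)
  finally show "pdJ e (expsum X E c a) J = expsum X E (\<lambda>x. c x * a x e) a J" .
qed

lemma pdJ_pow_expsum:
  assumes fE: "finite E" and e: "e \<in> E"
  shows "(pdJ e ^^ n) (expsum X E c a) = expsum X E (\<lambda>x. c x * a x e ^ n) a"
  by (induction n) (simp_all add: pdJ_expsum[OF fE e] mult_ac)

lemma mixed_expsum:
  assumes fE: "finite E" and es: "set es \<subseteq> E"
  shows "mixed_pderiv es m (expsum X E c a) = expsum X E (\<lambda>x. c x * (\<Prod>e\<leftarrow>es. a x e ^ m e)) a"
  using es
proof (induction es)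
  case Nil then show ?case by simp
next
  case (Cons e es)
  then have e: "e \<in> E" and es': "set es \<subseteq> E" by auto
  show ?case using Cons.IH[OF es'] by (simp add: pdJ_pow_expsum[OF fE e] mult_ac)
qed

lemma mixed_expsum0:
  assumes fE: "finite E" and es: "set es = E" and d: "distinct es"
  shows "mixed_pderiv es m (expsum X E c a) (\<lambda>_. 0) = (\<Sum>x\<in>X. c x * (\<Prod>e\<in>E. a x e ^ m e))"
proof -
  have "mixed_pderiv es m (expsum X E c a) (\<lambda>_. 0) = (\<Sum>x\<in>X. c x * (\<Prod>e\<leftarrow>es. a x e ^ m e))"
    using mixed_expsum[OF fE, of es m X c a] es by (simp add: expsum_def)
  also have "\<dots> = (\<Sum>x\<in>X. c x * (\<Prod>e\<in>E. a x e ^ m e))"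
    using d es by (simp add: prod.distinct_set_conv_list[symmetric])
  finally show ?thesis .
qed

lemma expsum_lin:
  assumes "finite I" "\<And>i. i \<in> I \<Longrightarrow> finite (X i)"
  shows "(\<lambda>J. \<Sum>i\<in>I. r i * expsum (X i) E (c i) (a i) J)
         = expsum (Sigma I X) E (\<lambda>(i, x). r i * c i x) (\<lambda>(i, x). a i x)"
proof
  fix J
  show "(\<Sum>i\<in>I. r i * expsum (X i) E (c i) (a i) J) = expsum (Sigma I X) E (\<lambda>(i, x). r i * c i x) (\<lambda>(i, x). a i x) J"
  proof -
    have "(\<Sum>i\<in>I. r i * expsum (X i) E (c i) (a i) J) = (\<Sum>i\<in>I. \<Sum>x\<in>X i. r i * c i x * exp (\<Sum>e\<in>E. J e * a i x e))"
      unfolding expsum_def by (simp add: sum_distrib_left mult_ac)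
    also have "\<dots> = (\<Sum>(i, x)\<in>Sigma I X. r i * c i x * exp (\<Sum>e\<in>E. J e * a i x e))"
      by (rule sum.Sigma) (use assms in auto)
    also have "\<dots> = expsum (Sigma I X) E (\<lambda>(i, x). r i * c i x) (\<lambda>(i, x). a i x) J"
      unfolding expsum_def by (simp add: split_def)
    finally show ?thesis .
  qed
qed

lemma mixed_lin0:
  assumes fE: "finite E" and es: "set es = E" and d: "distinct es"
    and fI: "finite I" and fX: "\<And>i. i \<in> I \<Longrightarrow> finite (X i)"
  shows "mixed_pderiv es m (\<lambda>J. \<Sum>i\<in>I. r i * expsum (X i) E (c i) (a i) J) (\<lambda>_. 0)
       = (\<Sum>i\<in>I. r i * (\<Sum>x\<in>X i. c i x * (\<Prod>e\<in>E. a i x e ^ m e)))"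
proof -
  have "mixed_pderiv es m (\<lambda>J. \<Sum>i\<in>I. r i * expsum (X i) E (c i) (a i) J) (\<lambda>_. 0)
     = (\<Sum>(i, x)\<in>Sigma I X. r i * c i x * (\<Prod>e\<in>E. a i x e ^ m e))"
  proof -
    have "(\<lambda>J. \<Sum>i\<in>I. r i * expsum (X i) E (c i) (a i) J)
         = expsum (Sigma I X) E (\<lambda>(i, x). r i * c i x) (\<lambda>(i, x). a i x)"
      by (rule expsum_lin[OF fI fX])
    then show ?thesis using mixed_expsum0[OF fE es d, of m "Sigma I X" "\<lambda>(i, x). r i * c i x" "\<lambda>(i, x). a i x"]
      by (simp add: split_def)
  qed
  also have "\<dots> = (\<Sum>i\<in>I. \<Sum>x\<in>X i. r i * c i x * (\<Prod>e\<in>E. a i x e ^ m e))"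
    by (rule sum.Sigma[symmetric]) (use fI fX in auto)
  also have "\<dots> = (\<Sum>i\<in>I. r i * (\<Sum>x\<in>X i. c i x * (\<Prod>e\<in>E. a i x e ^ m e)))"
    by (simp add: sum_distrib_left mult_ac)
  finally show ?thesis .
qed


definition Wf :: "'a set \<Rightarrow> 'a set set \<Rightarrow> (('a \<Rightarrow> real) \<Rightarrow> real) \<Rightarrow> ('a set \<Rightarrow> real) \<Rightarrow> real" where
  "Wf V E f J = (\<Sum>\<sigma>\<in>configs V. f \<sigma> * ising_weight E J \<sigma>)"

definition spin :: "'a set \<Rightarrow> ('a \<Rightarrow> real) \<Rightarrow> real" where
  "spin A \<sigma> = (\<Prod>x\<in>A. \<sigma> x)"

lemma Wf_expsum: "Wf V E f = expsum (configs V) E f (\<lambda>\<sigma> e. spin e \<sigma>)"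
  by (auto simp: Wf_def expsum_def ising_weight_def spin_def fun_eq_iff)

lemma Zfun_Wf: "Zfun V E = Wf V E (\<lambda>_. 1)"
  by (auto simp: Wf_def Zfun_def fun_eq_iff)

lemma expect_Wf: "ising_expect V E f J = Wf V E f J / Zfun V E J"
  by (simp add: ising_expect_def Wf_def)

lemma Z_pos: "finite V \<Longrightarrow> Zfun V E J > 0"
proof -
  assume fV: "finite V"
  have "restrict (\<lambda>_. 1) V \<in> configs V" by (auto simp: configs_def)
  then have "configs V \<noteq> {}" by blast
  then show ?thesis unfolding Zfun_def ising_weight_def
    using finite_configs[OF fV] by (intro sum_pos) auto
qed

lemma expsum_has_deriv:
  assumes fE: "finite E" and e: "e \<in> E"
  shows "((\<lambda>t. expsum X E c a (J(e := t))) has_real_derivative expsum X E (\<lambda>x. c x * a x e) a (J(e := t0))) (at t0)"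
proof -
  define S where "S x = (\<Sum>e'\<in>E - {e}. J e' * a x e')" for x
  have eq: "(\<Sum>e'\<in>E. (J(e := t)) e' * a x e') = t * a x e + S x" for t x
  proof -
    have "(\<Sum>e'\<in>E. (J(e := t)) e' * a x e') = (J(e := t)) e * a x e + (\<Sum>e'\<in>E - {e}. (J(e := t)) e' * a x e')"
      by (rule sum.remove[OF fE e])
    also have "(\<Sum>e'\<in>E - {e}. (J(e := t)) e' * a x e') = S x" unfolding S_def by (intro sum.cong) auto
    finally show ?thesis by simp
  qed
  have f: "(\<lambda>t. expsum X E c a (J(e := t))) = (\<lambda>t. \<Sum>x\<in>X. c x * exp (t * a x e + S x))"
    unfolding expsum_def eq ..
  have d: "((\<lambda>t. \<Sum>x\<in>X. c x * exp (t * a x e + S x)) has_real_derivative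
            (\<Sum>x\<in>X. c x * (exp (t * a x e + S x) * a x e))) (at t)" for t
    by (auto intro!: derivative_eq_intros sum.cong simp: mult_ac)
  have "(\<Sum>x\<in>X. c x * (exp (t0 * a x e + S x) * a x e)) = expsum X E (\<lambda>x. c x * a x e) a (J(e := t0))"
    unfolding expsum_def using eq[of t0] by (simp add: mult_ac)
  then show ?thesis using d[of t0] f by simp
qed

lemma Wf_has_deriv:
  assumes fE: "finite E" and e: "e \<in> E"
  shows "((\<lambda>t. Wf V E f (J(e := t))) has_real_derivative Wf V E (\<lambda>\<sigma>. f \<sigma> * spin e \<sigma>) (J(e := t0))) (at t0)"
  unfolding Wf_expsum by (rule expsum_has_deriv[OF fE e])

lemma prod_Wf_expsum:
  assumes fV: "finite V" and fI: "finite I"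
  shows "(\<Prod>i\<in>I. Wf V E (f i) J) =
    expsum (PiE I (\<lambda>_. configs V)) E (\<lambda>\<sigma>s. \<Prod>i\<in>I. f i (\<sigma>s i)) (\<lambda>\<sigma>s e. \<Sum>i\<in>I. spin e (\<sigma>s i)) J"
proof -
  have "(\<Prod>i\<in>I. Wf V E (f i) J) = (\<Sum>\<sigma>s\<in>PiE I (\<lambda>_. configs V). \<Prod>i\<in>I. f i (\<sigma>s i) * ising_weight E J (\<sigma>s i))"
    unfolding Wf_def by (rule prod_sum_PiE) (use fI finite_configs[OF fV] in auto)
  also have "\<dots> = expsum (PiE I (\<lambda>_. configs V)) E (\<lambda>\<sigma>s. \<Prod>i\<in>I. f i (\<sigma>s i)) (\<lambda>\<sigma>s e. \<Sum>i\<in>I. spin e (\<sigma>s i)) J"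
    unfolding expsum_def
  proof (intro sum.cong refl)
    fix \<sigma>s
    have "(\<Prod>i\<in>I. ising_weight E J (\<sigma>s i)) = exp (\<Sum>i\<in>I. \<Sum>e\<in>E. J e * spin e (\<sigma>s i))"
      unfolding ising_weight_def spin_def by (simp add: exp_sum fI)
    also have "(\<Sum>i\<in>I. \<Sum>e\<in>E. J e * spin e (\<sigma>s i)) = (\<Sum>e\<in>E. J e * (\<Sum>i\<in>I. spin e (\<sigma>s i)))"
      by (simp add: sum.swap[of _ I] sum_distrib_left)
    finally show "(\<Prod>i\<in>I. f i (\<sigma>s i) * ising_weight E J (\<sigma>s i)) =
        (\<Prod>i\<in>I. f i (\<sigma>s i)) * exp (\<Sum>e\<in>E. J e * (\<Sum>i\<in>I. spin e (\<sigma>s i)))"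
      by (simp add: prod.distrib)
  qed
  finally show ?thesis .
qed

definition fB :: "(nat \<Rightarrow> 'a) \<Rightarrow> nat set \<Rightarrow> ('a \<Rightarrow> real) \<Rightarrow> real" where
  "fB j B \<sigma> = (\<Prod>i\<in>B. \<sigma> (j i))"

definition dterm where
  "dterm V E e j B J = (Wf V E (\<lambda>\<sigma>. fB j B \<sigma> * spin e \<sigma>) J * Zfun V E J - Wf V E (fB j B) J * Wf V E (spin e) J)
      / (Zfun V E J * Zfun V E J)"

lemma pdJ_ursell:
  assumes fV: "finite V" and fE: "finite E" and e: "e \<in> E"
  shows "pdJ e (ursell V E n j) J =
    (\<Sum>P\<in>{P. partition_on {1..n} P}. (-1) ^ (card P - 1) * fact (card P - 1) *
      (\<Sum>B\<in>P. dterm V E e j B J * (\<Prod>B'\<in>P - {B}. Wf V E (fB j B') J / Zfun V E J)))"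
proof -
  define q where "q B t = Wf V E (fB j B) (J(e := t)) / Zfun V E (J(e := t))" for B t
  have Zd: "((\<lambda>t. Zfun V E (J(e := t))) has_real_derivative Wf V E (spin e) (J(e := t0))) (at t0)" for t0
    unfolding Zfun_Wf using Wf_has_deriv[OF fE e, of V "\<lambda>_. 1" J t0] by simp
  have qd: "(q B has_real_derivative dterm V E e j B (J(e := t0))) (at t0)" for B t0
    unfolding q_def dterm_def
    by (rule DERIV_divide[OF Wf_has_deriv[OF fE e] Zd]) (use Z_pos[OF fV] in \<open>simp add: less_imp_neq[symmetric]\<close>)
  have fin: "finite {P. partition_on {1..n} P}" by (rule finitely_many_partition_on) simp
  have u: "(\<lambda>t. ursell V E n j (J(e := t))) = (\<lambda>t. \<Sum>P\<in>{P. partition_on {1..n} P}.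
       (-1) ^ (card P - 1) * fact (card P - 1) * (\<Prod>B\<in>P. q B t))"
    unfolding ursell_def q_def expect_Wf fB_def ..
  have "((\<lambda>t. ursell V E n j (J(e := t))) has_real_derivative
     (\<Sum>P\<in>{P. partition_on {1..n} P}. (-1) ^ (card P - 1) * fact (card P - 1) *
      (\<Sum>B\<in>P. dterm V E e j B (J(e := J e)) * (\<Prod>B'\<in>P - {B}. q B' (J e))))) (at (J e))"
    unfolding u by (intro DERIV_sum DERIV_cmult has_field_derivative_prod qd)
  then have "pdJ e (ursell V E n j) J = (\<Sum>P\<in>{P. partition_on {1..n} P}. (-1) ^ (card P - 1) * fact (card P - 1) *
      (\<Sum>B\<in>P. dterm V E e j B (J(e := J e)) * (\<Prod>B'\<in>P - {B}. q B' (J e))))"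
    unfolding pdJ_def by (rule DERIV_imp_deriv)
  then show ?thesis by (simp add: q_def)
qed


definition neg :: "'a set \<Rightarrow> ('a \<Rightarrow> real) \<Rightarrow> 'a \<Rightarrow> real" where
  "neg V \<sigma> = restrict (\<lambda>x. - \<sigma> x) V"

lemma neg_configs: "\<sigma> \<in> configs V \<Longrightarrow> neg V \<sigma> \<in> configs V"
  by (auto simp: configs_def neg_def PiE_def Pi_def)

lemma neg_neg: "\<sigma> \<in> configs V \<Longrightarrow> neg V (neg V \<sigma>) = \<sigma>"
  by (auto simp: configs_def neg_def PiE_def extensional_def fun_eq_iff)

lemma spin_neg_edge:
  assumes ok: "edges_ok V E" and e: "e \<in> E"
  shows "spin e (neg V \<sigma>) = spin e \<sigma>"
proof -
  obtain x y where xy: "e = {x, y}" "x \<in> V" "y \<in> V" "x \<noteq> y" using ok e by (auto simp: edges_ok_def)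
  then show ?thesis by (simp add: spin_def neg_def)
qed

lemma weight_neg:
  assumes ok: "edges_ok V E"
  shows "ising_weight E J (neg V \<sigma>) = ising_weight E J \<sigma>"
  using spin_neg_edge[OF ok] unfolding ising_weight_def spin_def by simp

lemma Wf_odd:
  assumes ok: "edges_ok V E" and f: "\<And>\<sigma>. \<sigma> \<in> configs V \<Longrightarrow> f (neg V \<sigma>) = - f \<sigma>"
  shows "Wf V E f J = 0"
proof -
  have "Wf V E f J = (\<Sum>\<sigma>\<in>configs V. f (neg V \<sigma>) * ising_weight E J (neg V \<sigma>))"
    unfolding Wf_def
    by (rule sum.reindex_bij_witness[where i = "neg V" and j = "neg V"]) (auto simp: neg_neg neg_configs)
  also have "\<dots> = - Wf V E f J" unfolding Wf_def
    by (simp add: f weight_neg[OF ok] sum_negf)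
  finally show ?thesis by simp
qed

lemma prod_neg: "(\<Prod>i\<in>B. - (x i :: real)) = (-1) ^ card B * (\<Prod>i\<in>B. x i)"
proof -
  have "(\<Prod>i\<in>B. - x i) = (\<Prod>i\<in>B. (-1) * x i)" by (intro prod.cong) simp_all
  also have "\<dots> = (\<Prod>i\<in>B. -1) * (\<Prod>i\<in>B. x i)" by (rule prod.distrib)
  also have "(\<Prod>i\<in>B. -1::real) = (-1) ^ card B" by simp
  finally show ?thesis .
qed

lemma fB_neg: "j ` B \<subseteq> V \<Longrightarrow> fB j B (neg V \<sigma>) = (-1) ^ card B * fB j B \<sigma>"
proof -
  assume jB: "j ` B \<subseteq> V"
  have "fB j B (neg V \<sigma>) = (\<Prod>i\<in>B. - \<sigma> (j i))"
    unfolding fB_def neg_def using jB by (intro prod.cong) auto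
  then show ?thesis by (simp add: prod_neg fB_def)
qed

lemma dterm_odd:
  assumes ok: "edges_ok V E" and e: "e \<in> E" and jB: "j ` B \<subseteq> V" and odd: "odd (card B)"
  shows "Wf V E (fB j B) J = 0" "dterm V E e j B J = 0"
proof -
  show w: "Wf V E (fB j B) J = 0" by (rule Wf_odd[OF ok]) (simp add: fB_neg[OF jB] odd)
  have "Wf V E (\<lambda>\<sigma>. fB j B \<sigma> * spin e \<sigma>) J = 0"
    by (rule Wf_odd[OF ok]) (simp add: fB_neg[OF jB] odd spin_neg_edge[OF ok e])
  then show "dterm V E e j B J = 0" by (simp add: dterm_def w)
qed

lemma term_zero:
  assumes ok: "edges_ok V E" and e: "e \<in> E" and P: "partition_on {1..n} P"
    and jV: "j ` {1..n} \<subseteq> V" and B0: "B0 \<in> P" "odd (card B0)"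
  shows "(\<Sum>B\<in>P. dterm V E e j B J * (\<Prod>B'\<in>P - {B}. Wf V E (fB j B') J / Zfun V E J)) = 0"
proof (intro sum.neutral ballI)
  have sub: "B \<in> P \<Longrightarrow> j ` B \<subseteq> V" for B using P jV by (auto dest: partition_onD1)
  have fP: "finite P" using P by (rule finite_elements[rotated]) simp
  fix B assume B: "B \<in> P"
  show "dterm V E e j B J * (\<Prod>B'\<in>P - {B}. Wf V E (fB j B') J / Zfun V E J) = 0"
  proof (cases "B = B0")
    case True
    then show ?thesis using dterm_odd(2)[OF ok e sub[OF B]] B0 by simp
  next
    case False
    then have "B0 \<in> P - {B}" using B0 by simp
    moreover have "Wf V E (fB j B0) J / Zfun V E J = 0" using dterm_odd(1)[OF ok e sub[OF B0(1)] B0(2)] by simp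
    ultimately have "(\<Prod>B'\<in>P - {B}. Wf V E (fB j B') J / Zfun V E J) = 0"
      using fP by (intro prod_zero) auto
    then show ?thesis by simp
  qed
qed

lemma even_card_le:
  assumes P: "partition_on {1..2*k} P" and ev: "\<forall>B\<in>P. even (card B)"
  shows "card P \<le> k"
proof -
  have fP: "finite P" using P by (rule finite_elements[rotated]) simp
  have fb: "\<And>B. B \<in> P \<Longrightarrow> finite B"
    using P by (metis partition_onD1 Union_upper finite_atLeastAtMost finite_subset)
  have "sum card P = card (\<Union>P)"
    using P fb by (intro card_Union_disjoint[symmetric]) (auto simp: partition_on_def disjoint_def pairwise_def disjnt_def)
  also have "\<Union>P = {1..2*k}" using P by (simp add: partition_on_def)
  finally have s: "sum card P = 2 * k" by simp
  have "B \<in> P \<Longrightarrow> 2 \<le> card B" for B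
  proof -
    assume B: "B \<in> P"
    have "B \<noteq> {}" using P B by (auto simp: partition_on_def)
    moreover have "finite B" using fb B .
    ultimately have "card B \<noteq> 0" by simp
    moreover have "even (card B)" using ev B by blast
    ultimately show "2 \<le> card B" by presburger
  qed
  then have "of_nat (card P) * 2 \<le> sum card P" by (rule sum_bounded_below)
  then show ?thesis using s by simp
qed


definition cP :: "'b set \<Rightarrow> real" where "cP P = (-1) ^ (card P - 1) * fact (card P - 1)"

lemma alg1:
  fixes Z c N W :: real
  assumes "Z \<noteq> 0" "c \<noteq> 0" "1 \<le> p" "p \<le> k"
  shows "(Z / c) ^ (k + 1) * (N / (Z * Z) * (W / Z ^ (p - 1))) = N * Z ^ (k - p) * W / c ^ (k + 1)"
proof -
  have kk: "k + 1 = Suc (Suc ((p - 1) + (k - p)))" using assms by arith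
  have z: "Z ^ (k + 1) = Z * Z * Z ^ (p - 1) * Z ^ (k - p)"
    unfolding kk by (simp only: power_Suc power_add mult.assoc)
  show ?thesis using assms unfolding power_divide z by (simp add: field_simps)
qed

lemma G_index:
  assumes ok: "edges_ok V E" and e: "{u, v} \<in> E" and jV: "j ` {1..2*k} \<subseteq> V"
  shows "(Zfun V E J / 2 ^ card V) ^ (k + 1) * pdJ {u, v} (ursell V E (2*k) j) J =
    (\<Sum>P\<in>{P. partition_on {1..2*k} P \<and> (\<forall>B\<in>P. even (card B))}. cP P *
      (\<Sum>B\<in>P. (Wf V E (\<lambda>\<sigma>. fB j B \<sigma> * spin {u, v} \<sigma>) J * Zfun V E J - Wf V E (fB j B) J * Wf V E (spin {u, v}) J)
        * Zfun V E J ^ (k - card P) * (\<Prod>B'\<in>P - {B}. Wf V E (fB j B') J) / 2 ^ (card V * (k + 1))))"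
proof -
  have fV: "finite V" using ok by (simp add: edges_ok_def)
  have fE: "finite E" using edges_ok_finite[OF ok] .
  let ?Z = "Zfun V E J"
  have Z0: "?Z \<noteq> 0" using Z_pos[OF fV] by (metis less_irrefl)
  let ?T = "\<lambda>P. \<Sum>B\<in>P. dterm V E {u, v} j B J * (\<Prod>B'\<in>P - {B}. Wf V E (fB j B') J / ?Z)"
  let ?I = "{P. partition_on {1..2*k} P}"
  let ?Ie = "{P. partition_on {1..2*k} P \<and> (\<forall>B\<in>P. even (card B))}"
  have fin: "finite ?I" by (rule finitely_many_partition_on) simp
  have "pdJ {u, v} (ursell V E (2*k) j) J = (\<Sum>P\<in>?I. cP P * ?T P)"
    unfolding pdJ_ursell[OF fV fE e] cP_def ..
  also have "\<dots> = (\<Sum>P\<in>?Ie. cP P * ?T P)"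
  proof (rule sum.mono_neutral_right[OF fin])
    show "?Ie \<subseteq> ?I" by blast
    show "\<forall>P\<in>?I - ?Ie. cP P * ?T P = 0"
    proof
      fix P assume P: "P \<in> ?I - ?Ie"
      then obtain B0 where "B0 \<in> P" "odd (card B0)" by blast
      then have "?T P = 0" using P by (intro term_zero[OF ok e _ jV]) auto
      then show "cP P * ?T P = 0" by simp
    qed
  qed
  finally have 1: "pdJ {u, v} (ursell V E (2*k) j) J = (\<Sum>P\<in>?Ie. cP P * ?T P)" .
  have 2: "(?Z / 2 ^ card V) ^ (k + 1) * (\<Sum>P\<in>?Ie. cP P * ?T P) = (\<Sum>P\<in>?Ie. (?Z / 2 ^ card V) ^ (k + 1) * (cP P * ?T P))"
    by (rule sum_distrib_left)
  show ?thesis unfolding 1 2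
  proof (intro sum.cong refl)
    fix P assume P: "P \<in> ?Ie"
    have fP: "finite P" using P by (intro finite_elements[of "{1..2*k}"]) auto
    have pk: "card P \<le> k" using P even_card_le by blast
    show "(?Z / 2 ^ card V) ^ (k + 1) * (cP P * ?T P) = cP P *
      (\<Sum>B\<in>P. (Wf V E (\<lambda>\<sigma>. fB j B \<sigma> * spin {u, v} \<sigma>) J * ?Z - Wf V E (fB j B) J * Wf V E (spin {u, v}) J)
        * ?Z ^ (k - card P) * (\<Prod>B'\<in>P - {B}. Wf V E (fB j B') J) / 2 ^ (card V * (k + 1)))"
      unfolding sum_distrib_left
    proof (rule sum.cong[OF refl])
      fix B assume B: "B \<in> P"
      have p1: "1 \<le> card P" using fP B by (metis One_nat_def Suc_leI card_gt_0_iff empty_iff)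
      have cd: "card (P - {B}) = card P - 1" using fP B by simp
      have "(\<Prod>B'\<in>P - {B}. Wf V E (fB j B') J / ?Z) = (\<Prod>B'\<in>P - {B}. Wf V E (fB j B') J) / ?Z ^ (card P - 1)"
        by (simp add: prod_dividef cd)
      then have "(?Z / 2 ^ card V) ^ (k + 1) * (dterm V E {u, v} j B J * (\<Prod>B'\<in>P - {B}. Wf V E (fB j B') J / ?Z))
        = (Wf V E (\<lambda>\<sigma>. fB j B \<sigma> * spin {u, v} \<sigma>) J * ?Z - Wf V E (fB j B) J * Wf V E (spin {u, v}) J)
          * ?Z ^ (k - card P) * (\<Prod>B'\<in>P - {B}. Wf V E (fB j B') J) / (2 ^ card V) ^ (k + 1)"
        unfolding dterm_def by (simp only:) (rule alg1[OF Z0 _ p1 pk], simp)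
      note h = this
      have eq2: "((2::real) ^ card V) ^ (k + 1) = 2 ^ (card V * (k + 1))" by (simp only: power_mult)
      have "(?Z / 2 ^ card V) ^ (k + 1) * (cP P * (dterm V E {u, v} j B J * (\<Prod>B'\<in>P - {B}. Wf V E (fB j B') J / ?Z)))
          = cP P * ((?Z / 2 ^ card V) ^ (k + 1) * (dterm V E {u, v} j B J * (\<Prod>B'\<in>P - {B}. Wf V E (fB j B') J / ?Z)))"
        by (simp only: mult.left_commute)
      also have "\<dots> = cP P * ((Wf V E (\<lambda>\<sigma>. fB j B \<sigma> * spin {u, v} \<sigma>) J * ?Z - Wf V E (fB j B) J * Wf V E (spin {u, v}) J)
          * ?Z ^ (k - card P) * (\<Prod>B'\<in>P - {B}. Wf V E (fB j B') J) / (2 ^ card V) ^ (k + 1))"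
        by (simp only: h)
      finally show "(?Z / 2 ^ card V) ^ (k + 1) * (cP P * (dterm V E {u, v} j B J * (\<Prod>B'\<in>P - {B}. Wf V E (fB j B') J / ?Z))) =
         cP P * ((Wf V E (\<lambda>\<sigma>. fB j B \<sigma> * spin {u, v} \<sigma>) J * ?Z - Wf V E (fB j B) J * Wf V E (spin {u, v}) J)
          * ?Z ^ (k - card P) * (\<Prod>B'\<in>P - {B}. Wf V E (fB j B') J) / 2 ^ (card V * (k + 1)))"
        by (simp only: eq2)
    qed
  qed
qed


lemma part_img:
  assumes P: "partition_on S P" and j: "inj_on j S"
  shows "partition_on (j ` S) ((`) j ` P)"
proof -
  have "partition_on (j ` S) ((`) j ` P - {{}})" by (rule partition_on_inj_image[OF P j])
  moreover have "(`) j ` P - {{}} = (`) j ` P" using partition_onD3[OF P] by auto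
  ultimately show ?thesis by simp
qed

lemma pre_img: "B \<subseteq> S \<Longrightarrow> inj_on j S \<Longrightarrow> {i \<in> S. j i \<in> j ` B} = B"
  by (auto dest: inj_onD)

lemma img_pre: "B \<subseteq> j ` S \<Longrightarrow> j ` {i \<in> S. j i \<in> B} = B"
  by auto

lemma part_pre:
  assumes P: "partition_on (j ` S) Pv" and j: "inj_on j S"
  shows "partition_on S ((\<lambda>B. {i \<in> S. j i \<in> B}) ` Pv)"
proof (rule partition_onI)
  show "\<Union>((\<lambda>B. {i \<in> S. j i \<in> B}) ` Pv) = S" using partition_onD1[OF P] by auto
  show "{} \<notin> (\<lambda>B. {i \<in> S. j i \<in> B}) ` Pv"
  proof
    assume "{} \<in> (\<lambda>B. {i \<in> S. j i \<in> B}) ` Pv"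
    then obtain B where B: "B \<in> Pv" "{i \<in> S. j i \<in> B} = {}" by blast
    have "B \<subseteq> j ` S" using partition_onD1[OF P] B by auto
    moreover have "B \<noteq> {}" using partition_onD3[OF P] B by auto
    ultimately show False using B by auto
  qed
  fix p q assume "p \<in> (\<lambda>B. {i \<in> S. j i \<in> B}) ` Pv" "q \<in> (\<lambda>B. {i \<in> S. j i \<in> B}) ` Pv" "p \<noteq> q"
  then obtain B1 B2 where B: "B1 \<in> Pv" "B2 \<in> Pv" "p = {i \<in> S. j i \<in> B1}" "q = {i \<in> S. j i \<in> B2}" by blast
  with \<open>p \<noteq> q\<close> have "B1 \<noteq> B2" by auto
  then have "disjnt B1 B2" using partition_onD2[OF P] B by (auto simp: disjoint_def disjnt_def)
  then show "disjnt p q" using B by (auto simp: disjnt_def)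
qed

lemma blocks_sub: "partition_on S P \<Longrightarrow> B \<in> P \<Longrightarrow> B \<subseteq> S"
  by (auto dest: partition_onD1)

lemma inj_img_blocks:
  assumes P: "partition_on S P" and j: "inj_on j S"
  shows "inj_on ((`) j) P"
proof
  fix B1 B2 assume B: "B1 \<in> P" "B2 \<in> P" "j ` B1 = j ` B2"
  have "B1 \<subseteq> S" "B2 \<subseteq> S" using blocks_sub[OF P] B by auto
  then show "B1 = B2" using B(3) j by (metis inj_on_image_eq_iff)
qed

lemma card_img_blocks:
  assumes P: "partition_on S P" and j: "inj_on j S" and B: "B \<in> P"
  shows "card (j ` B) = card B"
  using blocks_sub[OF P B] j by (metis card_image inj_on_subset)

lemma fB_spin:
  assumes "inj_on j B"
  shows "fB j B = spin (j ` B)"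
  using assms by (auto simp: fB_def spin_def prod.reindex fun_eq_iff)

lemma sum_part_reindex:
  fixes S :: "nat set" and j :: "nat \<Rightarrow> 'a"
  assumes j: "inj_on j S"
  shows "(\<Sum>P\<in>{P. partition_on S P \<and> (\<forall>B\<in>P. even (card B))}. H ((`) j ` P))
       = (\<Sum>Pv\<in>{Pv. partition_on (j ` S) Pv \<and> (\<forall>B\<in>Pv. even (card B))}. H Pv)"
proof (rule sum.reindex_bij_witness[where i = "\<lambda>Pv. (\<lambda>B. {i \<in> S. j i \<in> B}) ` Pv" and j = "\<lambda>P. (`) j ` P"])
  fix P assume P: "P \<in> {P. partition_on S P \<and> (\<forall>B\<in>P. even (card B))}"
  then have Pp: "partition_on S P" by simp
  show "(\<lambda>B. {i \<in> S. j i \<in> B}) ` ((`) j ` P) = P"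
  proof -
    have "(\<lambda>B. {i \<in> S. j i \<in> B}) ` ((`) j ` P) = (\<lambda>B. {i \<in> S. j i \<in> j ` B}) ` P" by (simp add: image_image)
    also have "\<dots> = (\<lambda>B. B) ` P" using pre_img[OF blocks_sub[OF Pp] j] by (intro image_cong) auto
    finally show ?thesis by simp
  qed
  show "(`) j ` P \<in> {Pv. partition_on (j ` S) Pv \<and> (\<forall>B\<in>Pv. even (card B))}"
    using P part_img[OF Pp j] card_img_blocks[OF Pp j] by auto
next
  fix Pv assume Pv: "Pv \<in> {Pv. partition_on (j ` S) Pv \<and> (\<forall>B\<in>Pv. even (card B))}"
  then have Pp: "partition_on (j ` S) Pv" by simp
  have sub: "B \<in> Pv \<Longrightarrow> B \<subseteq> j ` S" for B using blocks_sub[OF Pp] .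
  show "(`) j ` (\<lambda>B. {i \<in> S. j i \<in> B}) ` Pv = Pv"
  proof -
    have "(`) j ` (\<lambda>B. {i \<in> S. j i \<in> B}) ` Pv = (\<lambda>B. j ` {i \<in> S. j i \<in> B}) ` Pv" by (simp add: image_image)
    also have "\<dots> = (\<lambda>B. B) ` Pv" using img_pre[OF sub] by (intro image_cong) auto
    finally show ?thesis by simp
  qed
  have pp: "partition_on S ((\<lambda>B. {i \<in> S. j i \<in> B}) ` Pv)" by (rule part_pre[OF Pp j])
  have "even (card {i \<in> S. j i \<in> B})" if B: "B \<in> Pv" for B
  proof -
    have "card (j ` {i \<in> S. j i \<in> B}) = card {i \<in> S. j i \<in> B}"
      using j by (intro card_image) (auto intro: inj_on_subset)
    then show ?thesis using img_pre[OF sub[OF B]] Pv B by (metis (no_types, lifting) mem_Collect_eq)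
  qed
  then show "(\<lambda>B. {i \<in> S. j i \<in> B}) ` Pv \<in> {P. partition_on S P \<and> (\<forall>B\<in>P. even (card B))}"
    using pp by auto
qed simp


definition Hv where
  "Hv V E u v k J Pv = cP Pv * (\<Sum>Q\<in>Pv. (Wf V E (\<lambda>\<sigma>. spin Q \<sigma> * spin {u, v} \<sigma>) J * Zfun V E J - Wf V E (spin Q) J * Wf V E (spin {u, v}) J)
        * Zfun V E J ^ (k - card Pv) * (\<Prod>B'\<in>Pv - {Q}. Wf V E (spin B') J) / 2 ^ (card V * (k + 1)))"

lemma G_vertex:
  assumes ok: "edges_ok V E" and e: "{u, v} \<in> E" and jV: "j ` {1..2*k} \<subseteq> V" and j: "inj_on j {1..2*k}"
  shows "(Zfun V E J / 2 ^ card V) ^ (k + 1) * pdJ {u, v} (ursell V E (2*k) j) J =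
    (\<Sum>Pv\<in>{Pv. partition_on (j ` {1..2*k}) Pv \<and> (\<forall>B\<in>Pv. even (card B))}. Hv V E u v k J Pv)"
proof -
  have "(\<Sum>P\<in>{P. partition_on {1..2*k} P \<and> (\<forall>B\<in>P. even (card B))}. cP P *
      (\<Sum>B\<in>P. (Wf V E (\<lambda>\<sigma>. fB j B \<sigma> * spin {u, v} \<sigma>) J * Zfun V E J - Wf V E (fB j B) J * Wf V E (spin {u, v}) J)
        * Zfun V E J ^ (k - card P) * (\<Prod>B'\<in>P - {B}. Wf V E (fB j B') J) / 2 ^ (card V * (k + 1))))
     = (\<Sum>P\<in>{P. partition_on {1..2*k} P \<and> (\<forall>B\<in>P. even (card B))}. Hv V E u v k J ((`) j ` P))"
  proof (rule sum.cong[OF refl])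
    fix P assume P: "P \<in> {P. partition_on {1..2*k} P \<and> (\<forall>B\<in>P. even (card B))}"
    then have Pp: "partition_on {1..2*k} P" by simp
    have ij: "inj_on ((`) j) P" by (rule inj_img_blocks[OF Pp j])
    have cc: "card ((`) j ` P) = card P" using ij by (rule card_image)
    have jB: "B \<in> P \<Longrightarrow> inj_on j B" for B using j blocks_sub[OF Pp] by (metis inj_on_subset)
    have "Hv V E u v k J ((`) j ` P) = cP P * (\<Sum>B\<in>P. (Wf V E (\<lambda>\<sigma>. spin (j ` B) \<sigma> * spin {u, v} \<sigma>) J * Zfun V E J - Wf V E (spin (j ` B)) J * Wf V E (spin {u, v}) J)
        * Zfun V E J ^ (k - card P) * (\<Prod>B'\<in>(`) j ` P - {j ` B}. Wf V E (spin B') J) / 2 ^ (card V * (k + 1)))"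
      unfolding Hv_def cP_def cc by (simp add: sum.reindex[OF ij])
    also have "\<dots> = cP P * (\<Sum>B\<in>P. (Wf V E (\<lambda>\<sigma>. fB j B \<sigma> * spin {u, v} \<sigma>) J * Zfun V E J - Wf V E (fB j B) J * Wf V E (spin {u, v}) J)
        * Zfun V E J ^ (k - card P) * (\<Prod>B'\<in>P - {B}. Wf V E (fB j B') J) / 2 ^ (card V * (k + 1)))"
    proof (intro arg_cong2[where f = "(*)"] refl sum.cong)
      fix B assume B: "B \<in> P"
      have d: "(`) j ` P - {j ` B} = (`) j ` (P - {B})" using ij B by (auto dest: inj_onD)
      have "(\<Prod>B'\<in>(`) j ` P - {j ` B}. Wf V E (spin B') J) = (\<Prod>B'\<in>P - {B}. Wf V E (spin (j ` B')) J)"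
        unfolding d using ij by (subst prod.reindex) (auto intro: inj_on_subset)
      also have "\<dots> = (\<Prod>B'\<in>P - {B}. Wf V E (fB j B') J)" using fB_spin[OF jB] by simp
      finally show "(Wf V E (\<lambda>\<sigma>. spin (j ` B) \<sigma> * spin {u, v} \<sigma>) J * Zfun V E J - Wf V E (spin (j ` B)) J * Wf V E (spin {u, v}) J)
        * Zfun V E J ^ (k - card P) * (\<Prod>B'\<in>(`) j ` P - {j ` B}. Wf V E (spin B') J) / 2 ^ (card V * (k + 1))
        = (Wf V E (\<lambda>\<sigma>. fB j B \<sigma> * spin {u, v} \<sigma>) J * Zfun V E J - Wf V E (fB j B) J * Wf V E (spin {u, v}) J)
        * Zfun V E J ^ (k - card P) * (\<Prod>B'\<in>P - {B}. Wf V E (fB j B') J) / 2 ^ (card V * (k + 1))"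
        using fB_spin[OF jB[OF B]] by simp
    qed
    finally show "cP P *
      (\<Sum>B\<in>P. (Wf V E (\<lambda>\<sigma>. fB j B \<sigma> * spin {u, v} \<sigma>) J * Zfun V E J - Wf V E (fB j B) J * Wf V E (spin {u, v}) J)
        * Zfun V E J ^ (k - card P) * (\<Prod>B'\<in>P - {B}. Wf V E (fB j B') J) / 2 ^ (card V * (k + 1)))
      = Hv V E u v k J ((`) j ` P)" by simp
  qed
  then show ?thesis unfolding G_index[OF ok e jV] sum_part_reindex[OF j] .
qed


definition Pe :: "'a set set \<Rightarrow> 'a set \<Rightarrow> nat \<Rightarrow> 'a set" where
  "Pe Pv Q = (SOME f. bij_betw f {1..<card Pv} (Pv - {Q}))"

definition A1 :: "'a \<Rightarrow> 'a \<Rightarrow> 'a set set \<Rightarrow> 'a set \<Rightarrow> nat \<Rightarrow> 'a set" where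
  "A1 u v Pv Q i = (if i < card Pv then Pe Pv Q i else if i = card Pv then (Q - {u, v}) \<union> ({u, v} - Q) else {})"

definition A2 :: "'a \<Rightarrow> 'a \<Rightarrow> 'a set set \<Rightarrow> 'a set \<Rightarrow> nat \<Rightarrow> 'a set" where
  "A2 u v Pv Q i = (if i < card Pv then Pe Pv Q i else if i = card Pv then Q else if i = Suc (card Pv) then {u, v} else {})"

lemma Pe_bij:
  assumes "finite Pv" "Q \<in> Pv"
  shows "bij_betw (Pe Pv Q) {1..<card Pv} (Pv - {Q})"
proof -
  have "card {1..<card Pv} = card (Pv - {Q})" using assms by simp
  then have "\<exists>f. bij_betw f {1..<card Pv} (Pv - {Q})"
    using assms by (intro finite_same_card_bij) auto
  then show ?thesis unfolding Pe_def by (rule someI_ex)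
qed

lemma spin_symdiff:
  assumes s: "\<sigma> \<in> configs V" and A: "A \<subseteq> V" and B: "B \<subseteq> V" and fV: "finite V"
  shows "spin A \<sigma> * spin B \<sigma> = spin ((A - B) \<union> (B - A)) \<sigma>"
proof -
  have fA: "finite A" and fB: "finite B" using A B fV by (auto intro: finite_subset)
  have 1: "spin A \<sigma> = spin (A \<inter> B) \<sigma> * spin (A - B) \<sigma>" unfolding spin_def by (rule prod.Int_Diff[OF fA])
  have 2: "spin B \<sigma> = spin (A \<inter> B) \<sigma> * spin (B - A) \<sigma>" unfolding spin_def
    using prod.Int_Diff[OF fB, of \<sigma> A] by (simp add: Int_commute)
  have "spin (A \<inter> B) \<sigma> * spin (A \<inter> B) \<sigma> = (\<Prod>x\<in>A \<inter> B. \<sigma> x * \<sigma> x)"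
    unfolding spin_def by (simp add: prod.distrib)
  also have "\<dots> = 1"
  proof (rule prod.neutral, rule ballI)
    fix x assume "x \<in> A \<inter> B"
    then have "\<sigma> x \<in> {-1, 1}" using s A by (auto simp: configs_def PiE_def Pi_def)
    then show "\<sigma> x * \<sigma> x = 1" by auto
  qed
  finally have 3: "spin (A \<inter> B) \<sigma> * spin (A \<inter> B) \<sigma> = 1" .
  have 4: "spin ((A - B) \<union> (B - A)) \<sigma> = spin (A - B) \<sigma> * spin (B - A) \<sigma>"
    unfolding spin_def by (rule prod.union_disjoint) (use fA fB in auto)
  show ?thesis unfolding 1 2 4 using 3 by (simp add: algebra_simps)
qed

lemma prod_split4:
  fixes g :: "nat \<Rightarrow> real"
  assumes "1 \<le> p" "p \<le> k"
  shows "(\<Prod>i=1..k+1. g i) = (\<Prod>i\<in>{1..<p}. g i) * g p * g (Suc p) * (\<Prod>i\<in>{p+2..k+1}. g i)"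
proof -
  have "{1..k+1} = {1..<p} \<union> ({p} \<union> ({Suc p} \<union> {p+2..k+1}))" using assms by auto
  then have "(\<Prod>i=1..k+1. g i) = (\<Prod>i\<in>{1..<p} \<union> ({p} \<union> ({Suc p} \<union> {p+2..k+1})). g i)" by simp
  also have "\<dots> = (\<Prod>i\<in>{1..<p}. g i) * (g p * (g (Suc p) * (\<Prod>i\<in>{p+2..k+1}. g i)))"
  proof -
    have d1: "{1..<p} \<inter> ({p} \<union> ({Suc p} \<union> {p+2..k+1})) = {}" by auto
    have d2: "{p} \<inter> ({Suc p} \<union> {p+2..k+1}) = {}" by auto
    have d3: "{Suc p} \<inter> {p+2..k+1} = {}" by auto
    show ?thesis
      by (subst prod.union_disjoint[OF _ _ d1], simp, simp, subst prod.union_disjoint[OF _ _ d2], simp, simp,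
          subst prod.union_disjoint[OF _ _ d3], simp, simp, simp)
  qed
  finally show ?thesis by (simp add: mult_ac)
qed

lemma Hv_prod:
  assumes ok: "edges_ok V E" and e: "{u, v} \<in> E"
    and Pv: "partition_on (j ` {1..2*k}) Pv" "\<forall>B\<in>Pv. even (card B)" and jV: "j ` {1..2*k} \<subseteq> V"
    and j: "inj_on j {1..2*k}"
  shows "Hv V E u v k J Pv = (\<Sum>Q\<in>Pv. cP Pv / 2 ^ (card V * (k + 1)) *
      ((\<Prod>i=1..k+1. Wf V E (spin (A1 u v Pv Q i)) J) - (\<Prod>i=1..k+1. Wf V E (spin (A2 u v Pv Q i)) J)))"
  unfolding Hv_def sum_distrib_left
proof (rule sum.cong[OF refl])
  fix Q assume Q: "Q \<in> Pv"
  have fV: "finite V" using ok by (simp add: edges_ok_def)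
  have fP: "finite Pv" using Pv(1) by (rule finite_elements[rotated]) simp
  let ?p = "card Pv"
  let ?Z = "Zfun V E J"
  let ?W = "\<lambda>A. Wf V E (spin A) J"
  have p1: "1 \<le> ?p" using fP Q by (metis One_nat_def Suc_leI card_gt_0_iff empty_iff)
  have pk: "?p \<le> k"
  proof -
    have pp: "partition_on {1..2*k} ((\<lambda>B. {i \<in> {1..2*k}. j i \<in> B}) ` Pv)" by (rule part_pre[OF Pv(1) j])
    have ii: "inj_on (\<lambda>B. {i \<in> {1..2*k}. j i \<in> B}) Pv"
      using img_pre[OF blocks_sub[OF Pv(1)]] by (metis (mono_tags, lifting) inj_onI)
    have ee: "\<forall>B\<in>(\<lambda>B. {i \<in> {1..2*k}. j i \<in> B}) ` Pv. even (card B)"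
    proof
      fix B' assume "B' \<in> (\<lambda>B. {i \<in> {1..2*k}. j i \<in> B}) ` Pv"
      then obtain B where B: "B \<in> Pv" "B' = {i \<in> {1..2*k}. j i \<in> B}" by blast
      have "card (j ` B') = card B'" using j B by (intro card_image) (auto intro: inj_on_subset)
      then show "even (card B')" using img_pre[OF blocks_sub[OF Pv(1) B(1)]] B Pv(2) by metis
    qed
    have "card ((\<lambda>B. {i \<in> {1..2*k}. j i \<in> B}) ` Pv) \<le> k" by (rule even_card_le[OF pp ee])
    then show ?thesis using card_image[OF ii] by simp
  qed
  have QV: "Q \<subseteq> V" using blocks_sub[OF Pv(1) Q] jV by auto
  have uvV: "{u, v} \<subseteq> V" using edges_ok_sub[OF ok e] .
  have sp0: "spin {} = (\<lambda>_. 1)" by (simp add: spin_def fun_eq_iff)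
  have Z: "?Z = ?W {}" by (simp add: Zfun_Wf sp0)
  have Wsd: "Wf V E (\<lambda>\<sigma>. spin Q \<sigma> * spin {u, v} \<sigma>) J = ?W ((Q - {u, v}) \<union> ({u, v} - Q))"
    unfolding Wf_def using spin_symdiff[OF _ QV uvV fV] by (intro sum.cong) auto
  have PP: "(\<Prod>B'\<in>Pv - {Q}. ?W B') = (\<Prod>i\<in>{1..<?p}. ?W (Pe Pv Q i))"
    by (rule prod.reindex_bij_betw[symmetric, OF Pe_bij[OF fP Q]])
  have Zp: "(\<Prod>i\<in>{?p+2..k+1}. ?W {}) = ?Z ^ (k - ?p)" using Z pk by simp
  have a1: "(\<Prod>i=1..k+1. ?W (A1 u v Pv Q i)) = (\<Prod>i\<in>{1..<?p}. ?W (Pe Pv Q i)) * ?W ((Q - {u, v}) \<union> ({u, v} - Q)) * ?Z * ?Z ^ (k - ?p)"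
  proof -
    have "(\<Prod>i=1..k+1. ?W (A1 u v Pv Q i)) = (\<Prod>i\<in>{1..<?p}. ?W (A1 u v Pv Q i)) * ?W (A1 u v Pv Q ?p) * ?W (A1 u v Pv Q (Suc ?p)) * (\<Prod>i\<in>{?p+2..k+1}. ?W (A1 u v Pv Q i))"
      by (rule prod_split4[OF p1 pk])
    also have "(\<Prod>i\<in>{1..<?p}. ?W (A1 u v Pv Q i)) = (\<Prod>i\<in>{1..<?p}. ?W (Pe Pv Q i))" by (intro prod.cong) (auto simp: A1_def)
    also have "(\<Prod>i\<in>{?p+2..k+1}. ?W (A1 u v Pv Q i)) = (\<Prod>i\<in>{?p+2..k+1}. ?W {})" by (intro prod.cong) (auto simp: A1_def)
    finally show ?thesis using Zp Z by (simp add: A1_def)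
  qed
  have a2: "(\<Prod>i=1..k+1. ?W (A2 u v Pv Q i)) = (\<Prod>i\<in>{1..<?p}. ?W (Pe Pv Q i)) * ?W Q * ?W {u, v} * ?Z ^ (k - ?p)"
  proof -
    have "(\<Prod>i=1..k+1. ?W (A2 u v Pv Q i)) = (\<Prod>i\<in>{1..<?p}. ?W (A2 u v Pv Q i)) * ?W (A2 u v Pv Q ?p) * ?W (A2 u v Pv Q (Suc ?p)) * (\<Prod>i\<in>{?p+2..k+1}. ?W (A2 u v Pv Q i))"
      by (rule prod_split4[OF p1 pk])
    also have "(\<Prod>i\<in>{1..<?p}. ?W (A2 u v Pv Q i)) = (\<Prod>i\<in>{1..<?p}. ?W (Pe Pv Q i))" by (intro prod.cong) (auto simp: A2_def)
    also have "(\<Prod>i\<in>{?p+2..k+1}. ?W (A2 u v Pv Q i)) = (\<Prod>i\<in>{?p+2..k+1}. ?W {})" by (intro prod.cong) (auto simp: A2_def)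
    finally show ?thesis using Zp by (simp add: A2_def)
  qed
  show "cP Pv * ((Wf V E (\<lambda>\<sigma>. spin Q \<sigma> * spin {u, v} \<sigma>) J * ?Z - ?W Q * ?W {u, v}) * ?Z ^ (k - ?p) *
          (\<Prod>B'\<in>Pv - {Q}. ?W B') / 2 ^ (card V * (k + 1))) =
        cP Pv / 2 ^ (card V * (k + 1)) * ((\<Prod>i=1..k+1. ?W (A1 u v Pv Q i)) - (\<Prod>i=1..k+1. ?W (A2 u v Pv Q i)))"
    unfolding a1 a2 Wsd PP by (simp add: field_simps)
qed


lemma vpart_facts:
  assumes Pv: "partition_on (j ` {1..2*k}) Pv" "\<forall>B\<in>Pv. even (card B)" and j: "inj_on j {1..2*k}"
    and k: "k \<ge> 1" and Q: "Q \<in> Pv"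
  shows "1 \<le> card Pv" "card Pv \<le> k" "finite Pv"
proof -
  show fP: "finite Pv" using Pv(1) by (rule finite_elements[rotated]) simp
  show "1 \<le> card Pv" using fP Q by (metis One_nat_def Suc_leI card_gt_0_iff empty_iff)
  have pp: "partition_on {1..2*k} ((\<lambda>B. {i \<in> {1..2*k}. j i \<in> B}) ` Pv)" by (rule part_pre[OF Pv(1) j])
  have ii: "inj_on (\<lambda>B. {i \<in> {1..2*k}. j i \<in> B}) Pv"
    using img_pre[OF blocks_sub[OF Pv(1)]] by (metis (mono_tags, lifting) inj_onI)
  have ee: "\<forall>B\<in>(\<lambda>B. {i \<in> {1..2*k}. j i \<in> B}) ` Pv. even (card B)"
  proof
    fix B' assume "B' \<in> (\<lambda>B. {i \<in> {1..2*k}. j i \<in> B}) ` Pv"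
    then obtain B where B: "B \<in> Pv" "B' = {i \<in> {1..2*k}. j i \<in> B}" by blast
    have "card (j ` B') = card B'" using j B by (intro card_image) (auto intro: inj_on_subset)
    then show "even (card B')" using img_pre[OF blocks_sub[OF Pv(1) B(1)]] B Pv(2) by metis
  qed
  have "card ((\<lambda>B. {i \<in> {1..2*k}. j i \<in> B}) ` Pv) \<le> k" by (rule even_card_le[OF pp ee])
  then show "card Pv \<le> k" using card_image[OF ii] by simp
qed

lemma RPQ_eq:
  assumes ok: "edges_ok V E" and e: "{u, v} \<in> E"
    and Pv: "partition_on (j ` {1..2*k}) Pv" "\<forall>B\<in>Pv. even (card B)" and j: "inj_on j {1..2*k}"
    and k: "k \<ge> 1" and Q: "Q \<in> Pv"
  shows "R_PQ E k u v m Pv Q =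
    (\<Sum>L\<in>lab E (k+1) m. if \<forall>i\<in>{1..k+1}. sources E (cnt E (k+1) m L i) = A1 u v Pv Q i then 1 else 0)
  - (\<Sum>L\<in>lab E (k+1) m. if \<forall>i\<in>{1..k+1}. sources E (cnt E (k+1) m L i) = A2 u v Pv Q i then 1 else 0)"
proof -
  let ?p = "card Pv"
  have p1: "1 \<le> ?p" and pk: "?p \<le> k" using vpart_facts[OF Pv j k Q] by auto
  have uv: "u \<noteq> v" by (rule edge_ne[OF ok e])
  have fE: "finite E" using edges_ok_finite[OF ok] .
  interpret S: swl V E "k+1" m ?p u v
    by unfold_locales (use ok p1 pk uv in auto)
  let ?C = "\<lambda>ns. (\<forall>i\<in>{1..<?p}. sources E (ns i) = Pe Pv Q i) \<and> sources E (ns ?p) = (Q - {u, v}) \<union> ({u, v} - Q)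
      \<and> (\<forall>i\<in>{?p<..k + 1}. sources E (ns i) = {})"
  let ?D = "\<lambda>ns. \<not> curr_connected E (\<lambda>e. ns ?p e + ns (?p + 1) e) u v"
  have C_iff: "?C ns \<longleftrightarrow> (\<forall>i\<in>{1..k+1}. sources E (ns i) = A1 u v Pv Q i)" for ns
  proof
    assume c: "?C ns"
    show "\<forall>i\<in>{1..k+1}. sources E (ns i) = A1 u v Pv Q i"
    proof
      fix i assume i: "i \<in> {1..k+1}"
      consider "i < ?p" | "i = ?p" | "i > ?p" by linarith
      then show "sources E (ns i) = A1 u v Pv Q i"
      proof cases
        case 1 then show ?thesis using c i by (simp add: A1_def)
      next
        case 2 then show ?thesis using c by (simp add: A1_def)
      next
        case 3 then show ?thesis using c i by (simp add: A1_def)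
      qed
    qed
  next
    assume h: "\<forall>i\<in>{1..k+1}. sources E (ns i) = A1 u v Pv Q i"
    have "\<forall>i\<in>{1..<?p}. sources E (ns i) = Pe Pv Q i"
    proof
      fix i assume i: "i \<in> {1..<?p}"
      then have "i \<in> {1..k+1}" using pk by auto
      then show "sources E (ns i) = Pe Pv Q i" using h i by (simp add: A1_def)
    qed
    moreover have "sources E (ns ?p) = (Q - {u, v}) \<union> ({u, v} - Q)"
    proof -
      have "?p \<in> {1..k+1}" using p1 pk by auto
      then show ?thesis using h by (simp add: A1_def)
    qed
    moreover have "\<forall>i\<in>{?p<..k + 1}. sources E (ns i) = {}"
    proof
      fix i assume i: "i \<in> {?p<..k + 1}"
      then have "i \<in> {1..k+1}" using p1 by auto
      then show "sources E (ns i) = {}" using h i by (simp add: A1_def)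
    qed
    ultimately show "?C ns" by blast
  qed
  have "R_PQ E k u v m Pv Q = (\<Sum>ns\<in>{ns \<in> current_tuples E (k + 1) m. ?C ns}. multinom E (k + 1) m ns * (if ?D ns then 1 else 0))"
    unfolding R_PQ_def Let_def Pe_def[symmetric] by simp
  also have "\<dots> = (\<Sum>ns\<in>current_tuples E (k + 1) m. multinom E (k + 1) m ns * (if ?C ns \<and> ?D ns then 1 else 0))"
  proof -
    have fin: "finite (current_tuples E (k + 1) m)" using tuples_image[OF fE] finite_lab[OF fE] by simp
    show ?thesis unfolding sum.inter_filter[OF fin] by (intro sum.cong) auto
  qed
  also have "\<dots> = (\<Sum>L\<in>lab E (k+1) m. if ?C (cnt E (k+1) m L) \<and> ?D (cnt E (k+1) m L) then 1 else 0)"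
    by (rule lemmaM[OF fE])
  also have "\<dots> = (\<Sum>L\<in>lab E (k+1) m. if (\<forall>i\<in>{1..k+1}. sources E (cnt E (k+1) m L i) = A1 u v Pv Q i) \<and> \<not> S.conn L then 1 else 0)"
    unfolding C_iff S.conn_def S.Nsum_def by simp
  also have "\<dots> = (\<Sum>L\<in>lab E (k+1) m. if \<forall>i\<in>{1..k+1}. sources E (cnt E (k+1) m L i) = A1 u v Pv Q i then 1 else 0)
     - (\<Sum>L\<in>lab E (k+1) m. if \<forall>i\<in>{1..k+1}. sources E (cnt E (k+1) m L i) = ((A1 u v Pv Q)(?p := (A1 u v Pv Q ?p - {u, v}) \<union> ({u, v} - A1 u v Pv Q ?p), Suc ?p := {u, v})) i then 1 else 0)"
    by (rule S.R_identity) (simp add: A1_def)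
  also have "(A1 u v Pv Q)(?p := (A1 u v Pv Q ?p - {u, v}) \<union> ({u, v} - A1 u v Pv Q ?p), Suc ?p := {u, v}) = A2 u v Pv Q"
    by (auto simp: A1_def A2_def fun_eq_iff)
  finally show ?thesis .
qed


lemma A_sub:
  fixes k :: nat
  assumes ok: "edges_ok V E" and e: "{u, v} \<in> E"
    and Pv: "partition_on (j ` {1..2*k}) Pv" "\<forall>B\<in>Pv. even (card B)" and j: "inj_on j {1..2*k}"
    and jV: "j ` {1..2*k} \<subseteq> V" and k: "k \<ge> 1" and Q: "Q \<in> Pv" and i: "1 \<le> i"
  shows "A1 u v Pv Q i \<subseteq> V" "A2 u v Pv Q i \<subseteq> V"
proof -
  have fP: "finite Pv" using vpart_facts[OF Pv j k Q] by simp
  have bV: "B \<in> Pv \<Longrightarrow> B \<subseteq> V" for B using blocks_sub[OF Pv(1)] jV by blast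
  have uvV: "{u, v} \<subseteq> V" using edges_ok_sub[OF ok e] .
  have pe: "i < card Pv \<Longrightarrow> 1 \<le> i \<Longrightarrow> Pe Pv Q i \<subseteq> V"
    using bij_betwE[OF Pe_bij[OF fP Q]] bV by auto
  show "A1 u v Pv Q i \<subseteq> V" unfolding A1_def using pe i bV[OF Q] uvV by auto
  show "A2 u v Pv Q i \<subseteq> V" unfolding A2_def using pe i bV[OF Q] uvV by auto
qed

theorem mainTheorem5:
  fixes V :: "'a set" and E :: "'a set set" and k :: nat and j :: "nat \<Rightarrow> 'a"
    and u v :: 'a and m :: "'a set \<Rightarrow> nat" and es :: "'a set list"
  assumes "finite V"
    and "E \<subseteq> {{x, y} | x y. x \<in> V \<and> y \<in> V \<and> x \<noteq> y}"
    and "k \<ge> 1"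
    and "inj_on j {1..2*k}"
    and "j ` {1..2*k} \<subseteq> V"
    and "{u, v} \<in> E"
    and "distinct es" and "set es = E"
  shows "R_fn E k j u v m =
    mixed_pderiv es m
      (\<lambda>J. (Zfun V E J / 2 ^ card V) ^ (k + 1) * pdJ {u, v} (ursell V E (2*k) j) J)
      (\<lambda>_. 0)"
proof -
  note fV = assms(1) and k = assms(3) and j = assms(4) and jV = assms(5) and e = assms(6)
    and des = assms(7) and ses = assms(8)
  have ok: "edges_ok V E" unfolding edges_ok_def using assms(1,2) by blast
  have fE: "finite E" using edges_ok_finite[OF ok] .
  define vpe where "vpe = {Pv. partition_on (j ` {1..2*k}) Pv \<and> (\<forall>B\<in>Pv. even (card B))}"
  have fvpe: "finite vpe" unfolding vpe_def
    by (rule finite_subset[OF _ finitely_many_partition_on[of "j ` {1..2*k}"]]) auto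
  have fPv: "Pv \<in> vpe \<Longrightarrow> finite Pv" for Pv
    unfolding vpe_def by (auto intro: finite_elements[of "j ` {1..2*k}"])
  define X :: "(nat \<Rightarrow> 'a \<Rightarrow> real) set" where "X = PiE {1..k+1} (\<lambda>_. configs V)"
  have fX: "finite X" unfolding X_def by (intro finite_PiE finite_configs[OF fV]) auto
  define av :: "(nat \<Rightarrow> 'a \<Rightarrow> real) \<Rightarrow> 'a set \<Rightarrow> real" where "av = (\<lambda>\<sigma>s e. \<Sum>i=1..k+1. spin e (\<sigma>s i))"
  define cA :: "(nat \<Rightarrow> 'a set) \<Rightarrow> (nat \<Rightarrow> 'a \<Rightarrow> real) \<Rightarrow> real" where "cA = (\<lambda>A \<sigma>s. \<Prod>i=1..k+1. spin (A i) (\<sigma>s i))"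
  define I where "I = Sigma vpe (\<lambda>Pv. Pv) \<times> (UNIV :: bool set)"
  have fI: "finite I" unfolding I_def using fvpe fPv by auto
  define Ab :: "('a set set \<times> 'a set) \<times> bool \<Rightarrow> nat \<Rightarrow> 'a set" where "Ab = (\<lambda>((Pv, Q), b). if b then A1 u v Pv Q else A2 u v Pv Q)"
  define r where "r = (\<lambda>((Pv :: 'a set set, Q :: 'a set), b). (if b then 1 else -1) * cP Pv / 2 ^ (card V * (k + 1)))"
  define Sl :: "(nat \<Rightarrow> 'a set) \<Rightarrow> real" where "Sl = (\<lambda>A. \<Sum>L\<in>lab E (k+1) m. if \<forall>i\<in>{1..k+1}. sources E (cnt E (k+1) m L i) = A i then 1 else 0 :: real)"
  have prodW: "(\<Prod>i=1..k+1. Wf V E (spin (A i)) J) = expsum X E (cA A) av J" for A J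
    unfolding X_def cA_def av_def by (rule prod_Wf_expsum[OF fV]) simp
  have sumI: "(\<Sum>x\<in>I. f x) = (\<Sum>Pv\<in>vpe. \<Sum>Q\<in>Pv. f ((Pv, Q), True) + f ((Pv, Q), False))" for f :: "_ \<Rightarrow> real"
  proof -
    have "(\<Sum>x\<in>I. f x) = (\<Sum>PQ\<in>Sigma vpe (\<lambda>Pv. Pv). \<Sum>b\<in>(UNIV :: bool set). f (PQ, b))"
      unfolding I_def by (rule sum.cartesian_product')
    also have "\<dots> = (\<Sum>PQ\<in>Sigma vpe (\<lambda>Pv. Pv). f (PQ, True) + f (PQ, False))"
      by (simp add: UNIV_bool add.commute)
    also have "\<dots> = (\<Sum>Pv\<in>vpe. \<Sum>Q\<in>Pv. f ((Pv, Q), True) + f ((Pv, Q), False))"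
      by (subst sum.Sigma) (use fvpe fPv in \<open>auto simp: split_def\<close>)
    finally show ?thesis .
  qed
  have G: "(\<lambda>J. (Zfun V E J / 2 ^ card V) ^ (k + 1) * pdJ {u, v} (ursell V E (2*k) j) J)
      = (\<lambda>J. \<Sum>x\<in>I. r x * expsum X E (cA (Ab x)) av J)"
  proof
    fix J
    have "(Zfun V E J / 2 ^ card V) ^ (k + 1) * pdJ {u, v} (ursell V E (2*k) j) J = (\<Sum>Pv\<in>vpe. Hv V E u v k J Pv)"
      unfolding vpe_def by (rule G_vertex[OF ok e jV j])
    also have "\<dots> = (\<Sum>Pv\<in>vpe. \<Sum>Q\<in>Pv. cP Pv / 2 ^ (card V * (k + 1)) *
      ((\<Prod>i=1..k+1. Wf V E (spin (A1 u v Pv Q i)) J) - (\<Prod>i=1..k+1. Wf V E (spin (A2 u v Pv Q i)) J)))"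
      by (intro sum.cong refl Hv_prod[OF ok e _ _ jV j]) (auto simp: vpe_def)
    also have "\<dots> = (\<Sum>x\<in>I. r x * expsum X E (cA (Ab x)) av J)"
      unfolding sumI prodW[symmetric] by (intro sum.cong refl) (simp add: r_def Ab_def algebra_simps)
    finally show "(Zfun V E J / 2 ^ card V) ^ (k + 1) * pdJ {u, v} (ursell V E (2*k) j) J = (\<Sum>x\<in>I. r x * expsum X E (cA (Ab x)) av J)" .
  qed
  have SL: "(\<Sum>\<sigma>s\<in>X. cA (Ab x) \<sigma>s * (\<Prod>e\<in>E. av \<sigma>s e ^ m e)) = 2 ^ (card V * (k + 1)) * Sl (Ab x)" if x: "x \<in> I" for x
  proof -
    obtain Pv Q b where xx: "x = ((Pv, Q), b)" by (metis prod.collapse)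
    have Pv: "Pv \<in> vpe" "Q \<in> Pv" using x xx by (auto simp: I_def)
    have sub: "\<And>i. i \<in> {1..k+1} \<Longrightarrow> Ab x i \<subseteq> V"
      using A_sub[OF ok e _ _ j jV k Pv(2)] Pv(1) unfolding Ab_def xx vpe_def by auto
    show ?thesis unfolding X_def cA_def av_def Sl_def spin_def
      by (rule spin_lab[OF ok, unfolded spin_def]) (use sub in auto)
  qed
  have "mixed_pderiv es m (\<lambda>J. (Zfun V E J / 2 ^ card V) ^ (k + 1) * pdJ {u, v} (ursell V E (2*k) j) J) (\<lambda>_. 0)
      = (\<Sum>x\<in>I. r x * (\<Sum>\<sigma>s\<in>X. cA (Ab x) \<sigma>s * (\<Prod>e\<in>E. av \<sigma>s e ^ m e)))"
    unfolding G by (rule mixed_lin0[OF fE ses des fI fX])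
  also have "\<dots> = (\<Sum>x\<in>I. r x * (2 ^ (card V * (k + 1)) * Sl (Ab x)))"
    by (intro sum.cong refl) (simp add: SL)
  also have "\<dots> = (\<Sum>Pv\<in>vpe. \<Sum>Q\<in>Pv. cP Pv * (Sl (A1 u v Pv Q) - Sl (A2 u v Pv Q)))"
    unfolding sumI by (intro sum.cong refl) (simp add: r_def Ab_def algebra_simps)
  also have "\<dots> = (\<Sum>Pv\<in>vpe. cP Pv * R_P E k u v m Pv)"
    unfolding R_P_def sum_distrib_left
  proof (intro sum.cong refl)
    fix Pv Q assume Pv: "Pv \<in> vpe" and Q: "Q \<in> Pv"
    show "cP Pv * (Sl (A1 u v Pv Q) - Sl (A2 u v Pv Q)) = cP Pv * R_PQ E k u v m Pv Q"
      using RPQ_eq[OF ok e _ _ j k Q] Pv by (simp add: Sl_def vpe_def)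
  qed
  also have "\<dots> = R_fn E k j u v m"
    unfolding R_fn_def vpe_def cP_def ..
  finally show ?thesis by simp
qed


end
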